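(* Let $n,k\ge1$ and let $\mathcal{S}_n^k$ be the extended Shi arrangement in $\mathbb{R}^n$ consisting of the hyperplanes $x_i-x_j=l$ for all $1\le i<j\le n$ and all integers $-k+1\le l\le k$. The map $\sigma_n^k$ (defined below) is a bijection between the regions of $\mathcal{S}_n^k$ and the $k$-parking functions on $[n]$.
   Context: A region of an arrangement is a connected component of the complement of the union of its hyperplanes. A $k$-parking function on $[n]$ is a sequence of positive integers $(a_1,\ldots,a_n)$ whose increasing rearrangement $b_1\le\cdots\le b_n$ satisfies $b_i\le 1+k(i-1)$ for all $i$. The diagram of a region $R$ of $\mathcal{S}_n^k$ is defined as follows. Let $y=y_1y_2\cdots y_{kn}$ be the unique ordering of the $kn$ expressions $x_i+m$ ($1\le i\le n$, $0\le m\le k-1$) such that $y_1>y_2>\cdots>y_{kn}$ holds on $R$ (determined by the hyperplanes $x_i-x_j=l$, $-k+1\le l\le k-1$); the position of $y_p$ is $p$. Draw an arc from $x_i+m$ to $x_i+m-1$ for all $i$ and all $0<m\le k-1$, and draw an arc from $x_i$ to $x_j+k-1$ whenever $i<j$ and $x_i-x_j>k$ holds on $R$ (arcs go rightwards). Remove every arc that contains another arc, i.e. an arc from $p$ to $q$ is removed if there is a different arc from $p'$ to $q'$ with $p$ weakly left of $p'$ and $q'$ weakly left of $q$. Replace each $x_i+m$ by $i$. The remaining arcs partition the multiset $\{1^k,2^k,\ldots,n^k\}$ into chains (connected components) of weakly increasing integers, with all $k$ copies of $i$ in the same chain. The map $\sigma_n^k$ sends $R$ to $(a_1,\ldots,a_n)$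 where $a_i$ is the position of the leftmost element of the chain containing the copies of $i$. *)

theory Defs
  imports "HOL-Analysis.Analysis"
begin

text \<open>R^n is modelled as the subspace of nat \<Rightarrow> real (product topology) of points
  whose coordinates outside 1..n vanish; coordinates are x 1, ..., x n.\<close>
definition ambient :: "nat \<Rightarrow> (nat \<Rightarrow> real) set" where
  "ambient n = {x. \<forall>i. i \<notin> {1..n} \<longrightarrow> x i = 0}"

definition shi_hyperplanes :: "nat \<Rightarrow> nat \<Rightarrow> (nat \<Rightarrow> real) set set" where
  "shi_hyperplanes n k = {{x \<in> ambient n. x i - x j = of_int l} | i j l.
      1 \<le> i \<and> i < j \<and> j \<le> n \<and> - int k + 1 \<le> l \<and> l \<le> int k}"

definition shi_complement :: "nat \<Rightarrow> nat \<Rightarrow> (nat \<Rightarrow> real) set" where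
  "shi_complement n k = ambient n - \<Union>(shi_hyperplanes n k)"

definition shi_regions :: "nat \<Rightarrow> nat \<Rightarrow> (nat \<Rightarrow> real) set set" where
  "shi_regions n k = {connected_component_set (shi_complement n k) x | x. x \<in> shi_complement n k}"

text \<open>The diagram. The element (i,m) stands for the expression x_i + m.\<close>
definition dg_elems :: "nat \<Rightarrow> nat \<Rightarrow> (nat \<times> nat) set" where
  "dg_elems n k = {1..n} \<times> {..<k}"

definition dg_val :: "(nat \<Rightarrow> real) \<Rightarrow> nat \<times> nat \<Rightarrow> real" where
  "dg_val x p = x (fst p) + real (snd p)"

text \<open>Position in the decreasing ordering y_1 > y_2 > ... > y_{kn} (1-based).\<close>
definition dg_pos :: "nat \<Rightarrow> nat \<Rightarrow> (nat \<Rightarrow> real) \<Rightarrow> nat \<times> nat \<Rightarrow> nat" where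
  "dg_pos n k x p = Suc (card {q \<in> dg_elems n k. dg_val x q > dg_val x p})"

definition dg_arcs :: "nat \<Rightarrow> nat \<Rightarrow> (nat \<Rightarrow> real) \<Rightarrow> ((nat \<times> nat) \<times> (nat \<times> nat)) set" where
  "dg_arcs n k x =
     {((i, m), (i, m - 1)) | i m. 1 \<le> i \<and> i \<le> n \<and> 0 < m \<and> m \<le> k - 1}
   \<union> {((i, 0), (j, k - 1)) | i j. 1 \<le> i \<and> i < j \<and> j \<le> n \<and> x i - x j > real k}"

text \<open>Remove every arc that contains a different arc.\<close>
definition dg_kept_arcs :: "nat \<Rightarrow> nat \<Rightarrow> (nat \<Rightarrow> real) \<Rightarrow> ((nat \<times> nat) \<times> (nat \<times> nat)) set" where
  "dg_kept_arcs n k x = {(p, q) \<in> dg_arcs n k x.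
     \<not> (\<exists>(p', q') \<in> dg_arcs n k x. (p', q') \<noteq> (p, q) \<and>
          dg_pos n k x p \<le> dg_pos n k x p' \<and> dg_pos n k x q' \<le> dg_pos n k x q)}"

definition dg_chain :: "nat \<Rightarrow> nat \<Rightarrow> (nat \<Rightarrow> real) \<Rightarrow> nat \<times> nat \<Rightarrow> (nat \<times> nat) set" where
  "dg_chain n k x p = {q. (p, q) \<in> (dg_kept_arcs n k x \<union> (dg_kept_arcs n k x)\<inverse>)\<^sup>*}"

definition sigma_pt :: "nat \<Rightarrow> nat \<Rightarrow> (nat \<Rightarrow> real) \<Rightarrow> nat list" where
  "sigma_pt n k x = map (\<lambda>i. Min (dg_pos n k x ` dg_chain n k x (i, 0))) [1..<n+1]"

definition shi_sigma :: "nat \<Rightarrow> nat \<Rightarrow> (nat \<Rightarrow> real) set \<Rightarrow> nat list" where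
  "shi_sigma n k R = sigma_pt n k (SOME x. x \<in> R)"

text \<open>k-parking functions on [n], as lists (a_1,...,a_n); sort a ! (i-1) = b_i.\<close>
definition k_parking :: "nat \<Rightarrow> nat \<Rightarrow> nat list \<Rightarrow> bool" where
  "k_parking n k a \<longleftrightarrow> length a = n \<and> (\<forall>v \<in> set a. 1 \<le> v) \<and>
     (\<forall>i < n. sort a ! i \<le> 1 + k * i)"

end

theory Submission
  imports Defs
begin

definition same :: "nat \<Rightarrow> nat \<Rightarrow> (nat \<Rightarrow> real) \<Rightarrow> (nat \<Rightarrow> real) \<Rightarrow> bool" where
  "same n k x y \<longleftrightarrow> (\<forall>i j l. 1 \<le> i \<and> i < j \<and> j \<le> n \<and> - int k + 1 \<le> l \<and> l \<le> int k \<longrightarrow>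
      (x i - x j > of_int l \<longleftrightarrow> y i - y j > of_int l))"

lemma compl_iff:
  "x \<in> shi_complement n k \<longleftrightarrow> x \<in> ambient n \<and>
    (\<forall>i j l. 1 \<le> i \<and> i < j \<and> j \<le> n \<and> - int k + 1 \<le> l \<and> l \<le> int k \<longrightarrow> x i - x j \<noteq> of_int l)"
  unfolding shi_complement_def shi_hyperplanes_def by auto

lemma conv_pos:
  fixes a b t :: real
  assumes "0 < a" "0 < b" "0 \<le> t" "t \<le> 1"
  shows "0 < (1 - t) * a + t * b"
proof -
  have "(1 - t) * min a b \<le> (1 - t) * a" by (rule mult_left_mono) (use assms in auto)
  moreover have "t * min a b \<le> t * b" by (rule mult_left_mono) (use assms in auto)
  moreover have "(1 - t) * min a b + t * min a b = min a b" by (simp add: algebra_simps)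
  moreover have "0 < min a b" using assms by simp
  ultimately show ?thesis by linarith
qed

lemma seg_in:
  assumes x: "x \<in> shi_complement n k" and y: "y \<in> shi_complement n k" and s: "same n k x y"
    and t: "0 \<le> t" "t \<le> (1::real)"
  shows "(\<lambda>i. (1 - t) * x i + t * y i) \<in> shi_complement n k \<and> same n k x (\<lambda>i. (1 - t) * x i + t * y i)"
proof -
  let ?z = "\<lambda>i. (1 - t) * x i + t * y i"
  have amb: "?z \<in> ambient n" using x y unfolding compl_iff ambient_def by auto
  have key: "(?z i - ?z j > of_int l \<longleftrightarrow> x i - x j > of_int l) \<and> ?z i - ?z j \<noteq> of_int l"
    if h: "1 \<le> i" "i < j" "j \<le> n" "- int k + 1 \<le> l" "l \<le> int k" for i j l
  proof -
    have e: "?z i - ?z j - of_int l = (1 - t) * (x i - x j - of_int l) + t * (y i - y j - of_int l)"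
      by (simp add: algebra_simps)
    have nx: "x i - x j \<noteq> of_int l" and ny: "y i - y j \<noteq> of_int l"
      using x y h unfolding compl_iff by blast+
    have sxy: "x i - x j > of_int l \<longleftrightarrow> y i - y j > of_int l" using s h unfolding same_def by blast
    show ?thesis
    proof (cases "x i - x j > of_int l")
      case True
      then have "y i - y j > of_int l" using sxy by simp
      then have "?z i - ?z j - of_int l > 0" unfolding e using True t
        conv_pos[of "x i - x j - of_int l" "y i - y j - of_int l" t] by simp
      then show ?thesis using True by simp
    next
      case False
      then have a: "x i - x j < of_int l" using nx by simp
      then have "y i - y j < of_int l" using sxy ny by simp
      then have "0 < (1 - t) * (of_int l - (x i - x j)) + t * (of_int l - (y i - y j))"
        using a t conv_pos[of "of_int l - (x i - x j)" "of_int l - (y i - y j)" t] by simp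
      then have "?z i - ?z j - of_int l < 0" unfolding e by (simp add: algebra_simps)
      then show ?thesis using False by simp
    qed
  qed
  show ?thesis using amb key unfolding compl_iff same_def by auto
qed

lemma same_sym: "same n k x y \<Longrightarrow> same n k y x" unfolding same_def by metis
lemma same_trans: "same n k x y \<Longrightarrow> same n k y z \<Longrightarrow> same n k x z" unfolding same_def by metis
lemma same_refl: "same n k x x" unfolding same_def by metis

lemma cell_sub_comp:
  assumes x: "x \<in> shi_complement n k" and y: "y \<in> shi_complement n k" and s: "same n k x y"
  shows "y \<in> connected_component_set (shi_complement n k) x"
proof -
  let ?g = "\<lambda>t::real. (\<lambda>i. (1 - t) * x i + t * y i)"
  have c: "continuous_on {0..1} ?g"
    by (intro continuous_on_coordinatewise_then_product continuous_on_add continuous_on_mult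
        continuous_on_const continuous_on_diff continuous_on_id)
  have "connected (?g ` {0..1})" by (intro connected_continuous_image c connected_Icc)
  moreover have "?g ` {0..1} \<subseteq> shi_complement n k" using seg_in[OF x y s] by auto
  moreover have "x \<in> ?g ` {0..1}" by (rule image_eqI[where x=0]) auto
  moreover have "y \<in> ?g ` {0..1}" by (rule image_eqI[where x=1]) auto
  ultimately show ?thesis unfolding connected_component_def by blast
qed

lemma comp_sub_cell:
  assumes x: "x \<in> shi_complement n k" and y: "y \<in> connected_component_set (shi_complement n k) x"
  shows "same n k x y"
proof -
  let ?C = "connected_component_set (shi_complement n k) x"
  have C: "connected ?C" "?C \<subseteq> shi_complement n k" "x \<in> ?C"
    using x connected_component_subset[of "shi_complement n k" x]
    by (auto simp: connected_component_refl)
  show ?thesis unfolding same_def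
  proof (intro allI impI)
    fix i j l assume h: "1 \<le> i \<and> i < j \<and> j \<le> n \<and> - int k + 1 \<le> l \<and> l \<le> int k"
    let ?f = "\<lambda>z::nat\<Rightarrow>real. z i - z j - of_int l"
    have c1: "continuous_on ?C (\<lambda>z::nat\<Rightarrow>real. z i)"
      by (rule continuous_on_subset[OF continuous_on_product_coordinates]) simp
    have c2: "continuous_on ?C (\<lambda>z::nat\<Rightarrow>real. z j)"
      by (rule continuous_on_subset[OF continuous_on_product_coordinates]) simp
    have cf: "continuous_on ?C ?f"
      by (intro continuous_on_diff c1 c2 continuous_on_const)
    have ci: "connected (?f ` ?C)" by (rule connected_continuous_image[OF cf C(1)])
    have nz: "?f z \<noteq> 0" if zC: "z \<in> ?C" for z
    proof -
      have "z \<in> shi_complement n k" using C(2) zC by blast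
      then have "z i - z j \<noteq> of_int l" using h unfolding compl_iff by blast
      then show ?thesis by simp
    qed
    have fx: "?f x \<in> ?f ` ?C" using C(3) by (rule imageI)
    have fy: "?f y \<in> ?f ` ?C" using y by (rule imageI)
    show "x i - x j > of_int l \<longleftrightarrow> y i - y j > of_int l"
    proof (rule ccontr)
      assume "\<not> ?thesis"
      then have "(?f y \<le> 0 \<and> 0 \<le> ?f x) \<or> (?f x \<le> 0 \<and> 0 \<le> ?f y)"
        by auto
      then have "0 \<in> ?f ` ?C"
      proof
        assume a: "?f y \<le> 0 \<and> 0 \<le> ?f x"
        show ?thesis using connectedD_interval[OF ci fy fx] a by blast
      next
        assume a: "?f x \<le> 0 \<and> 0 \<le> ?f y"
        show ?thesis using connectedD_interval[OF ci fx fy] a by blast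
      qed
      then show False using nz by auto
    qed
  qed
qed

lemma comp_eq:
  assumes x: "x \<in> shi_complement n k"
  shows "connected_component_set (shi_complement n k) x = {y \<in> shi_complement n k. same n k x y}"
  using cell_sub_comp[OF x] comp_sub_cell[OF x] connected_component_subset[of "shi_complement n k" x]
  by blast

lemma rank_less_iff:
  fixes v :: "'a \<Rightarrow> real"
  assumes fin: "finite S" and inj: "inj_on v S" and p: "p \<in> S" and q: "q \<in> S"
  shows "card {r \<in> S. v r > v p} < card {r \<in> S. v r > v q} \<longleftrightarrow> v p > v q"
proof
  assume "v p > v q"
  then have "{r \<in> S. v r > v p} \<subset> {r \<in> S. v r > v q}" using p by auto
  then show "card {r \<in> S. v r > v p} < card {r \<in> S. v r > v q}"
    by (intro psubset_card_mono) (use fin in auto)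
next
  assume c: "card {r \<in> S. v r > v p} < card {r \<in> S. v r > v q}"
  show "v p > v q"
  proof (rule ccontr)
    assume "\<not> v p > v q"
    then have "v q \<ge> v p" by simp
    then have "{r \<in> S. v r > v q} \<subseteq> {r \<in> S. v r > v p}" by auto
    then have "card {r \<in> S. v r > v q} \<le> card {r \<in> S. v r > v p}"
      by (intro card_mono) (use fin in auto)
    then show False using c by simp
  qed
qed

lemma rank_bij:
  fixes v :: "'a \<Rightarrow> real"
  assumes fin: "finite S" and inj: "inj_on v S"
  shows "bij_betw (\<lambda>p. Suc (card {r \<in> S. v r > v p})) S {1..card S}"
proof -
  let ?f = "\<lambda>p. Suc (card {r \<in> S. v r > v p})"
  have injf: "inj_on ?f S"
  proof (rule inj_onI)
    fix p q assume p: "p \<in> S" and q: "q \<in> S" and e: "?f p = ?f q"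
    show "p = q"
    proof (rule ccontr)
      assume "p \<noteq> q"
      then have "v p \<noteq> v q" using inj p q by (meson inj_on_def)
      then have "v p > v q \<or> v q > v p" by linarith
      then show False using rank_less_iff[OF fin inj p q] rank_less_iff[OF fin inj q p] e by auto
    qed
  qed
  have sub: "?f ` S \<subseteq> {1..card S}"
  proof
    fix y assume "y \<in> ?f ` S"
    then obtain p where p: "p \<in> S" and y: "y = ?f p" by auto
    have "{r \<in> S. v r > v p} \<subseteq> S - {p}" by auto
    then have "card {r \<in> S. v r > v p} \<le> card (S - {p})" by (intro card_mono) (use fin in auto)
    also have "\<dots> = card S - 1" using p fin by simp
    finally show "y \<in> {1..card S}" using y p fin card_gt_0_iff[of S] by auto
  qed
  have "card (?f ` S) = card S" using card_image[OF injf] .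
  then have "?f ` S = {1..card S}" using sub by (intro card_subset_eq) auto
  then show ?thesis using injf unfolding bij_betw_def by simp
qed

lemma finite_E: "finite (dg_elems n k)" unfolding dg_elems_def by simp
lemma card_E: "card (dg_elems n k) = n * k" unfolding dg_elems_def by (simp add: card_cartesian_product)

locale diag =
  fixes n k :: nat and x :: "nat \<Rightarrow> real"
  assumes k1: "1 \<le> k" and xc: "x \<in> shi_complement n k"
begin

abbreviation "E \<equiv> dg_elems n k"
abbreviation "pos \<equiv> dg_pos n k x"
abbreviation "val \<equiv> dg_val x"
abbreviation "Arc \<equiv> dg_arcs n k x"
abbreviation "K \<equiv> dg_kept_arcs n k x"
abbreviation "ch \<equiv> dg_chain n k x"

lemma E_iff: "(i, m) \<in> E \<longleftrightarrow> 1 \<le> i \<and> i \<le> n \<and> m < k" unfolding dg_elems_def by auto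

lemma xneq: "1 \<le> i \<Longrightarrow> i < j \<Longrightarrow> j \<le> n \<Longrightarrow> - int k + 1 \<le> l \<Longrightarrow> l \<le> int k \<Longrightarrow> x i - x j \<noteq> of_int l"
  using xc unfolding compl_iff by blast

lemma val_inj: "inj_on val E"
proof (rule inj_onI)
  fix p q assume p: "p \<in> E" and q: "q \<in> E" and e: "val p = val q"
  obtain i m where pp: "p = (i, m)" by fastforce
  obtain j m' where qq: "q = (j, m')" by fastforce
  have h: "1 \<le> i" "i \<le> n" "m < k" "1 \<le> j" "j \<le> n" "m' < k" using p q pp qq E_iff by auto
  have e2: "x i + real m = x j + real m'" using e pp qq unfolding dg_val_def by simp
  show "p = q"
  proof (cases "i = j")
    case True then show ?thesis using e2 pp qq by simp
  next
    case False
    then have "i < j \<or> j < i" by linarith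
    then show ?thesis
    proof
      assume ij: "i < j"
      have "x i - x j = of_int (int m' - int m)" using e2 by simp
      moreover have "x i - x j \<noteq> of_int (int m' - int m)" by (rule xneq) (use h ij in auto)
      ultimately show ?thesis by simp
    next
      assume ij: "j < i"
      have "x j - x i = of_int (int m - int m')" using e2 by simp
      moreover have "x j - x i \<noteq> of_int (int m - int m')" by (rule xneq) (use h ij in auto)
      ultimately show ?thesis by simp
    qed
  qed
qed

lemma pos_less_iff: "p \<in> E \<Longrightarrow> q \<in> E \<Longrightarrow> pos p < pos q \<longleftrightarrow> val p > val q"
  unfolding dg_pos_def using rank_less_iff[OF finite_E val_inj] by simp

lemma pos_bij: "bij_betw pos E {1..n*k}"
  unfolding dg_pos_def using rank_bij[OF finite_E val_inj] card_E by simp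

lemma pos_inj: "p \<in> E \<Longrightarrow> q \<in> E \<Longrightarrow> pos p = pos q \<Longrightarrow> p = q"
  using pos_bij unfolding bij_betw_def inj_on_def by blast

lemma pos_range: "p \<in> E \<Longrightarrow> 1 \<le> pos p \<and> pos p \<le> n * k"
  using pos_bij unfolding bij_betw_def by auto

lemma pos_surj: "1 \<le> q \<Longrightarrow> q \<le> n * k \<Longrightarrow> \<exists>e\<in>E. pos e = q"
  using pos_bij unfolding bij_betw_def by (metis atLeastAtMost_iff imageE)

lemma pos_le_iff: "p \<in> E \<Longrightarrow> q \<in> E \<Longrightarrow> pos p \<le> pos q \<longleftrightarrow> val p \<ge> val q"
  using pos_less_iff[of q p] by linarith

lemma arc_cases:
  "(p, q) \<in> Arc \<longleftrightarrow> (\<exists>i m. p = (i, m) \<and> q = (i, m - 1) \<and> 1 \<le> i \<and> i \<le> n \<and> 0 < m \<and> m \<le> k - 1)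
     \<or> (\<exists>i j. p = (i, 0) \<and> q = (j, k - 1) \<and> 1 \<le> i \<and> i < j \<and> j \<le> n \<and> x i - x j > real k)"
  unfolding dg_arcs_def by blast

lemma arc_E: "(p, q) \<in> Arc \<Longrightarrow> p \<in> E \<and> q \<in> E"
  unfolding arc_cases using k1 by (auto simp: E_iff)

lemma arc_val: "(p, q) \<in> Arc \<Longrightarrow> val p - val q \<ge> 1"
  unfolding arc_cases dg_val_def using k1 by (auto simp: of_nat_diff)

lemma arc_pos: "(p, q) \<in> Arc \<Longrightarrow> pos p < pos q"
  using arc_val[of p q] arc_E[of p q] pos_less_iff by auto

lemma arc_fst: "(p, q) \<in> Arc \<Longrightarrow> fst p \<le> fst q"
  unfolding arc_cases by auto

lemma kept_iff: "(p, q) \<in> K \<longleftrightarrow> (p, q) \<in> Arc \<and>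
   \<not> (\<exists>p' q'. (p', q') \<in> Arc \<and> (p', q') \<noteq> (p, q) \<and> pos p \<le> pos p' \<and> pos q' \<le> pos q)"
  unfolding dg_kept_arcs_def by blast

lemma K_Arc: "(p, q) \<in> K \<Longrightarrow> (p, q) \<in> Arc" using kept_iff by blast

lemma copy_arc: "1 \<le> i \<Longrightarrow> i \<le> n \<Longrightarrow> 0 < m \<Longrightarrow> m < k \<Longrightarrow> ((i, m), (i, m - 1)) \<in> Arc"
  unfolding arc_cases by auto

lemma copy_kept: assumes h: "1 \<le> i" "i \<le> n" "0 < m" "m < k"
  shows "((i, m), (i, m - 1)) \<in> K"
proof -
  have a: "((i, m), (i, m - 1)) \<in> Arc" using copy_arc h by blast
  have eE: "(i, m) \<in> E" "(i, m - 1) \<in> E" using h by (auto simp: E_iff)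
  { fix p' q' assume b: "(p', q') \<in> Arc" "(p', q') \<noteq> ((i, m), (i, m - 1))"
      "pos (i, m) \<le> pos p'" "pos q' \<le> pos (i, m - 1)"
    have pq: "p' \<in> E" "q' \<in> E" using arc_E b(1) by auto
    have "val p' \<le> val (i, m)" using b(3) pos_le_iff[OF eE(1) pq(1)] by simp
    then have v1: "val p' \<le> x i + m" unfolding dg_val_def by simp
    have "val (i, m - 1) \<le> val q'" using b(4) pos_le_iff[OF pq(2) eE(2)] by simp
    then have v2: "val q' \<ge> x i + m - 1" using h unfolding dg_val_def by (simp add: of_nat_diff)
    have False
    proof (cases "(p', q')" rule: prod.exhaust)
      case (Pair p'' q'')
      from b(1)[unfolded arc_cases] show False
      proof
        assume "\<exists>i' m'. p' = (i', m') \<and> q' = (i', m' - 1) \<and> 1 \<le> i' \<and> i' \<le> n \<and> 0 < m' \<and> m' \<le> k - 1"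
        then obtain i' m' where c: "p' = (i', m')" "q' = (i', m' - 1)" "0 < m'" by blast
        have "val p' - val q' = 1" using c unfolding dg_val_def by (simp add: of_nat_diff)
        then have "val p' = x i + m" "val q' = x i + m - 1" using v1 v2 by linarith+
        then have "val p' = val (i, m)" "val q' = val (i, m - 1)"
          using h unfolding dg_val_def by (auto simp: of_nat_diff)
        then have "p' = (i, m)" "q' = (i, m - 1)"
          using inj_onD[OF val_inj] pq eE by blast+
        then show False using b(2) by simp
      next
        assume "\<exists>i' j'. p' = (i', 0) \<and> q' = (j', k - 1) \<and> 1 \<le> i' \<and> i' < j' \<and> j' \<le> n \<and> x i' - x j' > real k"
        then obtain i' j' where c: "p' = (i', 0)" "q' = (j', k - 1)" "x i' - x j' > real k" by blast
        have "val p' - val q' > 1" using c k1 unfolding dg_val_def by (simp add: of_nat_diff)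
        then show False using v1 v2 by linarith
      qed
    qed }
  then show ?thesis using a kept_iff by blast
qed

lemma in_deg: "(u, v) \<in> K \<Longrightarrow> (u', v) \<in> K \<Longrightarrow> u = u'"
proof (rule ccontr)
  assume a: "(u, v) \<in> K" "(u', v) \<in> K" "u \<noteq> u'"
  have E: "u \<in> E" "u' \<in> E" using a arc_E K_Arc by blast+
  then have "pos u \<noteq> pos u'" using pos_inj a(3) by blast
  then have "pos u < pos u' \<or> pos u' < pos u" by linarith
  then show False
  proof
    assume "pos u < pos u'"
    then have "pos u \<le> pos u'" "pos v \<le> pos v" "(u', v) \<noteq> (u, v)" using a(3) by auto
    then show False using a(1) K_Arc[OF a(2)] unfolding kept_iff by blast
  next
    assume "pos u' < pos u"
    then have "pos u' \<le> pos u" "pos v \<le> pos v" "(u, v) \<noteq> (u', v)" using a(3) by auto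
    then show False using a(2) K_Arc[OF a(1)] unfolding kept_iff by blast
  qed
qed

lemma out_deg: "(u, v) \<in> K \<Longrightarrow> (u, v') \<in> K \<Longrightarrow> v = v'"
proof (rule ccontr)
  assume a: "(u, v) \<in> K" "(u, v') \<in> K" "v \<noteq> v'"
  have E: "v \<in> E" "v' \<in> E" using a arc_E K_Arc by blast+
  then have "pos v \<noteq> pos v'" using pos_inj a(3) by blast
  then have "pos v < pos v' \<or> pos v' < pos v" by linarith
  then show False
  proof
    assume "pos v < pos v'"
    then have "pos u \<le> pos u" "pos v \<le> pos v'" "(u, v) \<noteq> (u, v')" using a(3) by auto
    then show False using a(2) K_Arc[OF a(1)] unfolding kept_iff by blast
  next
    assume "pos v' < pos v"
    then have "pos u \<le> pos u" "pos v' \<le> pos v" "(u, v') \<noteq> (u, v)" using a(3) by auto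
    then show False using a(1) K_Arc[OF a(2)] unfolding kept_iff by blast
  qed
qed

end

definition Aof :: "nat list \<Rightarrow> nat \<Rightarrow> nat" where "Aof a i = a ! (i - 1)"

definition succA :: "(nat \<Rightarrow> nat) \<Rightarrow> nat \<Rightarrow> nat \<Rightarrow> nat \<times> nat \<Rightarrow> (nat \<times> nat) option" where
  "succA A n k e = (if 0 < snd e then Some (fst e, snd e - 1)
     else if (\<exists>j. fst e < j \<and> j \<le> n \<and> A j = A (fst e))
     then Some (LEAST j. fst e < j \<and> j \<le> n \<and> A j = A (fst e), k - 1) else None)"

definition isstart :: "(nat \<Rightarrow> nat) \<Rightarrow> nat \<Rightarrow> nat \<Rightarrow> bool" where
  "isstart A n p \<longleftrightarrow> (\<exists>i. 1 \<le> i \<and> i \<le> n \<and> A i = p)"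

definition firstl :: "(nat \<Rightarrow> nat) \<Rightarrow> nat \<Rightarrow> nat \<Rightarrow> nat" where
  "firstl A n p = (LEAST i. 1 \<le> i \<and> i \<le> n \<and> A i = p)"

definition pend :: "(nat \<Rightarrow> nat) \<Rightarrow> nat \<Rightarrow> nat \<Rightarrow> (nat \<times> nat) list \<Rightarrow> (nat \<times> nat) list" where
  "pend A n k w = filter (\<lambda>e. succA A n k e \<noteq> None \<and> the (succA A n k e) \<notin> set w) w"

definition stepW :: "(nat \<Rightarrow> nat) \<Rightarrow> nat \<Rightarrow> nat \<Rightarrow> (nat \<times> nat) list \<Rightarrow> nat \<Rightarrow> nat \<times> nat" where
  "stepW A n k w p = (if isstart A n p then (firstl A n p, k - 1)
      else the (succA A n k (hd (pend A n k w))))"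

primrec W :: "(nat \<Rightarrow> nat) \<Rightarrow> nat \<Rightarrow> nat \<Rightarrow> nat \<Rightarrow> (nat \<times> nat) list" where
  "W A n k 0 = []"
| "W A n k (Suc p) = W A n k p @ [stepW A n k (W A n k p) (Suc p)]"

lemma hd_filter_nth:
  "i < length w \<Longrightarrow> P (w ! i) \<Longrightarrow> (\<forall>j<i. \<not> P (w ! j)) \<Longrightarrow> hd (filter P w) = w ! i"
proof (induction w arbitrary: i)
  case Nil then show ?case by simp
next
  case (Cons a w)
  show ?case
  proof (cases i)
    case 0 then show ?thesis using Cons.prems by simp
  next
    case (Suc i')
    have "\<not> P a" using Cons.prems(3) Suc by auto
    moreover have "hd (filter P w) = w ! i'"
    proof (rule Cons.IH)
      show "i' < length w" using Cons.prems(1) Suc by simp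
      show "P (w ! i')" using Cons.prems(2) Suc by simp
      show "\<forall>j<i'. \<not> P (w ! j)" using Cons.prems(3) Suc by auto
    qed
    ultimately show ?thesis using Suc by simp
  qed
qed

context diag
begin

definition A :: "nat \<Rightarrow> nat" where "A = Aof (sigma_pt n k x)"

abbreviation "S \<equiv> K \<union> K\<inverse>"

lemma ch_def2: "ch e = {q. (e, q) \<in> S\<^sup>*}" unfolding dg_chain_def by simp

lemma ch_refl: "e \<in> ch e" unfolding ch_def2 by simp

lemma S_sym: "(S\<^sup>*)\<inverse> = S\<^sup>*"
proof -
  have "(S\<^sup>*)\<inverse> = (S\<inverse>)\<^sup>*" by (simp add: rtrancl_converse)
  also have "S\<inverse> = S" by auto
  finally show ?thesis .
qed

lemma ch_sym: "q \<in> ch e \<Longrightarrow> e \<in> ch q"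
proof -
  assume "q \<in> ch e"
  then have "(e, q) \<in> S\<^sup>*" unfolding ch_def2 by simp
  then have "(q, e) \<in> (S\<^sup>*)\<inverse>" by simp
  then have "(q, e) \<in> S\<^sup>*" using S_sym by simp
  then show "e \<in> ch q" unfolding ch_def2 by simp
qed

lemma ch_trans: "q \<in> ch e \<Longrightarrow> r \<in> ch q \<Longrightarrow> r \<in> ch e"
  unfolding ch_def2 using rtrancl_trans[of e q S r] by simp

lemma ch_eq: "q \<in> ch e \<Longrightarrow> ch q = ch e"
  using ch_sym ch_trans by blast

lemma K_ch: "(p, q) \<in> K \<Longrightarrow> q \<in> ch p" unfolding ch_def2 by (simp add: r_into_rtrancl)

lemma ch_E: assumes "e \<in> E" shows "ch e \<subseteq> E"
proof
  fix q assume "q \<in> ch e"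
  then have "(e, q) \<in> S\<^sup>*" unfolding ch_def2 by simp
  then show "q \<in> E"
  proof (induction rule: rtrancl_induct)
    case base then show ?case using assms .
  next
    case (step y z) then show ?case using arc_E K_Arc by blast
  qed
qed

lemma finite_ch: "e \<in> E \<Longrightarrow> finite (ch e)"
  using ch_E finite_E finite_subset by blast

lemma copies_ch: assumes "1 \<le> i" "i \<le> n" "m < k" shows "(i, m) \<in> ch (i, 0)"
  using assms(3)
proof (induction m)
  case 0 show ?case by (rule ch_refl)
next
  case (Suc m)
  have "((i, Suc m), (i, m)) \<in> K" using copy_kept[of i "Suc m"] assms Suc.prems by simp
  then have "(i, Suc m) \<in> ch (i, m)" using K_ch ch_sym by blast
  moreover have "(i, m) \<in> ch (i, 0)" using Suc.IH Suc.prems by simp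
  ultimately show ?case using ch_trans by blast
qed

lemma ch_copy: assumes "(i, m) \<in> E" shows "ch (i, m) = ch (i, 0)"
  using copies_ch[of i m] assms ch_eq by (simp add: E_iff)

lemma A_eq: assumes "1 \<le> i" "i \<le> n" shows "A i = Min (pos ` ch (i, 0))"
proof -
  have l: "i - 1 < length [1..<n+1]" using assms by simp
  have "A i = sigma_pt n k x ! (i - 1)" unfolding A_def Aof_def by simp
  also have "\<dots> = Min (pos ` ch ([1..<n+1] ! (i - 1), 0))"
    unfolding sigma_pt_def by (rule nth_map[OF l])
  also have "[1..<n+1] ! (i - 1) = i" using assms by (subst nth_upt) auto
  finally show ?thesis by simp
qed

lemma iE: "1 \<le> i \<Longrightarrow> i \<le> n \<Longrightarrow> (i, 0) \<in> E" using k1 by (simp add: E_iff)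

lemma A_in: assumes "1 \<le> i" "i \<le> n" shows "A i \<in> pos ` ch (i, 0)"
  unfolding A_eq[OF assms] using finite_ch[OF iE[OF assms]] ch_refl
  by (intro Min_in) auto

lemma A_le: assumes "1 \<le> i" "i \<le> n" "q \<in> ch (i, 0)" shows "A i \<le> pos q"
  unfolding A_eq[OF assms(1,2)] using finite_ch[OF iE[OF assms(1,2)]] assms(3)
  by (intro Min_le) auto

lemma A_same: assumes "1 \<le> i" "i \<le> n" "1 \<le> j" "j \<le> n" "A i = A j"
  shows "ch (i, 0) = ch (j, 0)"
proof -
  obtain e where e: "e \<in> ch (i, 0)" "pos e = A i" using A_in[OF assms(1,2)] by auto
  obtain e' where e': "e' \<in> ch (j, 0)" "pos e' = A j" using A_in[OF assms(3,4)] by auto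
  have "e \<in> E" "e' \<in> E" using e e' ch_E iE assms by blast+
  then have "e = e'" using pos_inj e e' assms(5) by simp
  then show ?thesis using ch_eq[OF e(1)] ch_eq[OF e'(1)] by simp
qed

lemma ch_class: assumes "1 \<le> i" "i \<le> n"
  shows "ch (i, 0) = {(j, m). 1 \<le> j \<and> j \<le> n \<and> m < k \<and> A j = A i}"
proof
  show "ch (i, 0) \<subseteq> {(j, m). 1 \<le> j \<and> j \<le> n \<and> m < k \<and> A j = A i}"
  proof
    fix q assume q: "q \<in> ch (i, 0)"
    obtain j m where qq: "q = (j, m)" by fastforce
    have "q \<in> E" using q ch_E iE assms by blast
    then have h: "1 \<le> j" "j \<le> n" "m < k" using qq E_iff by auto
    have "ch (j, 0) = ch (i, 0)" using ch_copy[of j m] \<open>q \<in> E\<close> qq ch_eq[OF q] by simp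
    then have "A j = A i" using A_eq h assms by simp
    then show "q \<in> {(j, m). 1 \<le> j \<and> j \<le> n \<and> m < k \<and> A j = A i}" using h qq by simp
  qed
next
  show "{(j, m). 1 \<le> j \<and> j \<le> n \<and> m < k \<and> A j = A i} \<subseteq> ch (i, 0)"
  proof
    fix q assume "q \<in> {(j, m). 1 \<le> j \<and> j \<le> n \<and> m < k \<and> A j = A i}"
    moreover obtain j m where "q = (j, m)" by fastforce
    ultimately have h: "q = (j, m)" "1 \<le> j" "j \<le> n" "m < k" "A j = A i" by auto
    have "ch (j, 0) = ch (i, 0)" using A_same[OF h(2,3) assms h(5)] .
    then show "q \<in> ch (i, 0)" using copies_ch[of j m] h by simp
  qed
qed

lemma Kstar_mono: "(p, q) \<in> K\<^sup>* \<Longrightarrow> pos p \<le> pos q \<and> fst p \<le> fst q"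
proof (induction rule: rtrancl_induct)
  case base then show ?case by simp
next
  case (step y z)
  then show ?case using arc_pos[OF K_Arc[OF step(2)]] arc_fst[OF K_Arc[OF step(2)]] by linarith
qed

lemma noin_F: assumes noin: "\<And>u. (u, e) \<notin> K" shows "ch e \<subseteq> {v. (e, v) \<in> K\<^sup>*}"
proof
  fix q assume "q \<in> ch e"
  then have "(e, q) \<in> S\<^sup>*" unfolding ch_def2 by simp
  then show "q \<in> {v. (e, v) \<in> K\<^sup>*}"
  proof (induction rule: rtrancl_induct)
    case base then show ?case by simp
  next
    case (step y z)
    then have ey: "(e, y) \<in> K\<^sup>*" by simp
    from step.hyps(2) show ?case
    proof
      assume "(y, z) \<in> K" then show ?thesis using ey by simp
    next
      assume "(y, z) \<in> K\<inverse>"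
      then have zy: "(z, y) \<in> K" by simp
      have "y \<noteq> e" using zy noin by blast
      then have tr1: "(e, y) \<in> K\<^sup>+" using rtranclD[OF ey] by blast
      obtain w where "(e, w) \<in> K\<^sup>*" "(w, y) \<in> K" using tranclD2[OF tr1] by blast
      then have "w = z" using in_deg zy by blast
      then show ?thesis using \<open>(e, w) \<in> K\<^sup>*\<close> by simp
    qed
  qed
qed

lemma comparable: assumes "(e, u) \<in> K\<^sup>*" "(e, v) \<in> K\<^sup>*"
  shows "(u, v) \<in> K\<^sup>* \<or> (v, u) \<in> K\<^sup>*"
  using assms(2)
proof (induction rule: rtrancl_induct)
  case base then show ?case using assms(1) by simp
next
  case (step y z)
  from step.IH show ?case
  proof
    assume "(u, y) \<in> K\<^sup>*" then show ?thesis using step.hyps(2) by (meson rtrancl.rtrancl_into_rtrancl)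
  next
    assume yu: "(y, u) \<in> K\<^sup>*"
    show ?thesis
    proof (cases "y = u")
      case True then show ?thesis using step.hyps(2) by (simp add: r_into_rtrancl)
    next
      case False
      then have tr2: "(y, u) \<in> K\<^sup>+" using rtranclD[OF yu] by blast
      obtain w where "(y, w) \<in> K" "(w, u) \<in> K\<^sup>*" using tranclD[OF tr2] by blast
      then have "w = z" using out_deg step.hyps(2) by blast
      then show ?thesis using \<open>(w, u) \<in> K\<^sup>*\<close> by simp
    qed
  qed
qed

lemma leftmost:
  assumes i: "1 \<le> i" "i \<le> n"
  obtains e0 where "e0 \<in> ch (i, 0)" "pos e0 = A i" "\<And>u. (u, e0) \<notin> K"
    "ch (i, 0) \<subseteq> {v. (e0, v) \<in> K\<^sup>*}" "e0 = (firstl A n (A i), k - 1)"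
proof -
  obtain e0 where e0: "e0 \<in> ch (i, 0)" "pos e0 = A i" using A_in[OF i] by auto
  have e0E: "e0 \<in> E" using e0 ch_E iE i by blast
  have noin: "(u, e0) \<notin> K" for u
  proof
    assume u: "(u, e0) \<in> K"
    then have "u \<in> ch (i, 0)" using K_ch ch_sym ch_trans e0(1) by blast
    then have "A i \<le> pos u" using A_le i by blast
    moreover have "pos u < pos e0" using arc_pos K_Arc u by blast
    ultimately show False using e0 by simp
  qed
  have F: "ch (i, 0) \<subseteq> {v. (e0, v) \<in> K\<^sup>*}" using noin_F[OF noin] ch_eq[OF e0(1)] by simp
  obtain j0 m0 where jm: "e0 = (j0, m0)" by fastforce
  have h: "1 \<le> j0" "j0 \<le> n" "m0 < k" using e0E jm E_iff by auto
  have m0: "m0 = k - 1"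
  proof (rule ccontr)
    assume "m0 \<noteq> k - 1"
    then have "((j0, Suc m0), (j0, m0)) \<in> K" using copy_kept[of j0 "Suc m0"] h by simp
    then show False using noin jm by blast
  qed
  have Aj0: "A j0 = A i" using e0(1) jm ch_class[OF i] by simp
  have "firstl A n (A i) = j0"
    unfolding firstl_def
  proof (rule Least_equality)
    show "1 \<le> j0 \<and> j0 \<le> n \<and> A j0 = A i" using h Aj0 by simp
  next
    fix j assume j: "1 \<le> j \<and> j \<le> n \<and> A j = A i"
    then have "(j, 0) \<in> ch (i, 0)" using ch_class[OF i] k1 by simp
    then have "(e0, (j, 0)) \<in> K\<^sup>*" using F by blast
    then show "j0 \<le> j" using Kstar_mono[of e0 "(j, 0)"] jm by simp
  qed
  then have "e0 = (firstl A n (A i), k - 1)" using jm m0 by simp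
  then show ?thesis using that e0 noin F by blast
qed

lemma start_elem:
  assumes "isstart A n p"
  shows "(firstl A n p, k - 1) \<in> E \<and> pos (firstl A n p, k - 1) = p"
proof -
  obtain i where i: "1 \<le> i" "i \<le> n" "A i = p" using assms unfolding isstart_def by blast
  obtain e0 where "e0 \<in> ch (i, 0)" "pos e0 = A i" "\<And>u. (u, e0) \<notin> K"
    "ch (i, 0) \<subseteq> {v. (e0, v) \<in> K\<^sup>*}" "e0 = (firstl A n (A i), k - 1)"
    by (rule leftmost[OF i(1,2)]) blast
  then show ?thesis using i ch_E iE by blast
qed

lemma nonstart_in:
  assumes e: "e \<in> E" and ns: "\<not> isstart A n (pos e)"
  obtains u where "(u, e) \<in> K"
proof -
  have "\<exists>u. (u, e) \<in> K"
  proof (rule ccontr)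
    assume "\<not> ?thesis"
    then have F: "ch e \<subseteq> {v. (e, v) \<in> K\<^sup>*}" using noin_F by blast
    obtain j m where jm: "e = (j, m)" by fastforce
    have h: "1 \<le> j" "j \<le> n" "m < k" using e jm E_iff by auto
    have che: "ch e = ch (j, 0)" using ch_copy e jm by simp
    have "A j \<le> pos e" using A_le[OF h(1,2)] che ch_refl by blast
    moreover have "pos e \<le> A j"
    proof -
      obtain q where q: "q \<in> ch (j, 0)" "pos q = A j" using A_in[OF h(1,2)] by auto
      then have "(e, q) \<in> K\<^sup>*" using F che by blast
      then show ?thesis using Kstar_mono[OF \<open>(e, q) \<in> K\<^sup>*\<close>] q by simp
    qed
    ultimately have "A j = pos e" by simp
    then show False using ns h unfolding isstart_def by blast
  qed
  then show ?thesis using that by blast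
qed

lemma succ_K: assumes v: "v \<in> E" and vw: "(v, w) \<in> K" shows "succA A n k v = Some w"
proof -
  obtain i m where im: "v = (i, m)" by fastforce
  have h: "1 \<le> i" "i \<le> n" "m < k" using v im E_iff by auto
  show ?thesis
  proof (cases "0 < m")
    case True
    have "(v, (i, m - 1)) \<in> K" using copy_kept[of i m] h True im by simp
    then have "w = (i, m - 1)" using out_deg vw by blast
    then show ?thesis unfolding succA_def using im True by simp
  next
    case False
    then have m0: "m = 0" by simp
    have "(v, w) \<in> Arc" using K_Arc vw by blast
    then obtain j where j: "w = (j, k - 1)" "i < j" "j \<le> n"
      unfolding arc_cases using im m0 by auto
    have "w \<in> ch (i, 0)" using K_ch vw im m0 by simp
    then have Aj: "A j = A i" using ch_class[OF h(1,2)] j by simp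
    have L: "(LEAST j'. i < j' \<and> j' \<le> n \<and> A j' = A i) = j"
    proof (rule Least_equality)
      show "i < j \<and> j \<le> n \<and> A j = A i" using j Aj by simp
    next
      fix j'' assume j'': "i < j'' \<and> j'' \<le> n \<and> A j'' = A i"
      show "j \<le> j''"
      proof (rule ccontr)
        assume "\<not> j \<le> j''"
        then have lt: "j'' < j" by simp
        obtain e0 where "e0 \<in> ch (i, 0)" "pos e0 = A i" "\<And>u. (u, e0) \<notin> K"
          and e0: "ch (i, 0) \<subseteq> {v. (e0, v) \<in> K\<^sup>*}" and "e0 = (firstl A n (A i), k - 1)"
          by (rule leftmost[OF h(1,2)]) blast
        have "(j'', k - 1) \<in> ch (i, 0)" using ch_class[OF h(1,2)] j'' h k1 by auto
        then have a1: "(e0, (j'', k - 1)) \<in> K\<^sup>*" using e0 by blast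
        have a2: "(e0, (i, 0)) \<in> K\<^sup>*" using e0 ch_refl by blast
        from comparable[OF a2 a1] show False
        proof
          assume c: "((i, 0), (j'', k - 1)) \<in> K\<^sup>*"
          have ne: "(i, 0) \<noteq> (j'', k - 1)" using j'' by auto
          have tr3: "((i, 0), (j'', k - 1)) \<in> K\<^sup>+" using rtranclD[OF c] ne by blast
          obtain w' where "((i, 0), w') \<in> K" "(w', (j'', k - 1)) \<in> K\<^sup>*"
            using tranclD[OF tr3] by blast
          moreover have "w' = w" using out_deg vw im m0 calculation(1) by blast
          ultimately have "(w, (j'', k - 1)) \<in> K\<^sup>*" by simp
          then have "fst w \<le> j''" using Kstar_mono[of w "(j'', k - 1)"] by simp
          then show False using j lt by simp
        next
          assume "((j'', k - 1), (i, 0)) \<in> K\<^sup>*"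
          then have "j'' \<le> i" using Kstar_mono[of "(j'', k - 1)" "(i, 0)"] by simp
          then show False using j'' by simp
        qed
      qed
    qed
    have "\<exists>j. i < j \<and> j \<le> n \<and> A j = A i" using j Aj by blast
    then show ?thesis unfolding succA_def using im m0 L j by simp
  qed
qed

lemma succ_ex: assumes v: "v \<in> E" and s: "succA A n k v \<noteq> None" obtains w where "(v, w) \<in> K"
proof -
  obtain i m where im: "v = (i, m)" by fastforce
  have h: "1 \<le> i" "i \<le> n" "m < k" using v im E_iff by auto
  have "\<exists>w. (v, w) \<in> K"
  proof (cases "0 < m")
    case True
    then show ?thesis using copy_kept[of i m] h im by blast
  next
    case False
    then have m0: "m = 0" by simp
    then obtain j where j: "i < j" "j \<le> n" "A j = A i"
      using s im unfolding succA_def by (auto split: if_splits)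
    obtain e0 where "e0 \<in> ch (i, 0)" "pos e0 = A i" "\<And>u. (u, e0) \<notin> K"
          and e0: "ch (i, 0) \<subseteq> {v. (e0, v) \<in> K\<^sup>*}" and "e0 = (firstl A n (A i), k - 1)"
          by (rule leftmost[OF h(1,2)]) blast
    have "(j, 0) \<in> ch (i, 0)" using ch_class[OF h(1,2)] j h k1 by auto
    then have a1: "(e0, (j, 0)) \<in> K\<^sup>*" using e0 by blast
    have a2: "(e0, (i, 0)) \<in> K\<^sup>*" using e0 ch_refl by blast
    from comparable[OF a2 a1] show ?thesis
    proof
      assume c: "((i, 0), (j, 0)) \<in> K\<^sup>*"
      have ne: "(i, 0) \<noteq> (j, 0)" using j by auto
      have tr4: "((i, 0), (j, 0)) \<in> K\<^sup>+" using rtranclD[OF c] ne by blast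
      obtain w' where "((i, 0), w') \<in> K"
        using tranclD[OF tr4] by blast
      then show ?thesis using im m0 by blast
    next
      assume "((j, 0), (i, 0)) \<in> K\<^sup>*"
      then have "j \<le> i" using Kstar_mono[of "(j, 0)" "(i, 0)"] by simp
      then show ?thesis using j by simp
    qed
  qed
  then show ?thesis using that by blast
qed

end

lemma card_filter_list: "card {i. i < length a \<and> P (a ! i)} = length (filter P a)"
  by (simp add: length_filter_conv_card)

lemma length_filter_sort: "length (filter P (sort a)) = length (filter P (a :: nat list))"
proof -
  have "length (filter P (sort a)) = size (filter_mset P (mset (sort a)))"
    by (metis mset_filter size_mset)
  also have "\<dots> = size (filter_mset P (mset a))" by simp
  also have "\<dots> = length (filter P a)" by (metis mset_filter size_mset)
  finally show ?thesis .
qed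

lemma sort_count_less:
  fixes a :: "nat list"
  assumes c: "c < length a"
  shows "card {i. i < length a \<and> a ! i < sort a ! c} \<le> c"
proof -
  let ?s = "sort a" and ?P = "\<lambda>v. v < sort a ! c"
  have s: "sorted ?s" "length ?s = length a" by auto
  have "filter ?P (drop c ?s) = []"
  proof -
    have "\<forall>v\<in>set (drop c ?s). \<not> ?P v"
    proof
      fix v assume "v \<in> set (drop c ?s)"
      then obtain t where t: "t < length (drop c ?s)" "v = drop c ?s ! t" by (metis in_set_conv_nth)
      then have "v = ?s ! (c + t)" "c + t < length ?s" by auto
      then show "\<not> ?P v" using sorted_nth_mono[OF s(1), of c "c + t"] by simp
    qed
    then show ?thesis by (simp add: filter_empty_conv)
  qed
  then have "filter ?P ?s = filter ?P (take c ?s)"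
    by (metis append_Nil2 append_take_drop_id filter_append)
  then have "length (filter ?P ?s) \<le> c"
    by (metis length_filter_le length_take min.bounded_iff nat_le_linear order_trans)
  then show ?thesis using card_filter_list[of a ?P] length_filter_sort[of ?P a] by simp
qed

lemma sort_count_le:
  fixes a :: "nat list"
  assumes c: "c < length a" and v: "sort a ! c \<le> v"
  shows "Suc c \<le> card {i. i < length a \<and> a ! i \<le> v}"
proof -
  let ?s = "sort a" and ?P = "\<lambda>u. u \<le> v"
  have s: "sorted ?s" "length ?s = length a" by auto
  have "filter ?P (take (Suc c) ?s) = take (Suc c) ?s"
  proof -
    have "\<forall>u\<in>set (take (Suc c) ?s). ?P u"
    proof
      fix u assume "u \<in> set (take (Suc c) ?s)"
      then obtain t where t: "t < length (take (Suc c) ?s)" "u = take (Suc c) ?s ! t" by (metis in_set_conv_nth)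
      then have "u = ?s ! t" "t \<le> c" "c < length ?s" using c by auto
      then show "?P u" using sorted_nth_mono[OF s(1), of t c] v by simp
    qed
    then show ?thesis by (simp add: filter_id_conv)
  qed
  moreover have "length (take (Suc c) ?s) = Suc c" using c by simp
  moreover have "length (filter ?P (take (Suc c) ?s)) \<le> length (filter ?P ?s)"
    by (metis append_take_drop_id filter_append le_add1 length_append)
  ultimately show ?thesis using card_filter_list[of a ?P] length_filter_sort[of ?P a] by simp
qed

lemma succA_E:
  assumes k1: "1 \<le> k" and e: "e \<in> dg_elems n k" and s: "succA A n k e = Some w"
  shows "w \<in> dg_elems n k"
proof -
  obtain i m where im: "e = (i, m)" by fastforce
  have h: "1 \<le> i" "i \<le> n" "m < k" using e im by (auto simp: dg_elems_def)
  show ?thesis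
  proof (cases "0 < m")
    case True
    then have "w = (i, m - 1)" using s im unfolding succA_def by simp
    then show ?thesis using h by (auto simp: dg_elems_def)
  next
    case False
    then have ex: "\<exists>j. i < j \<and> j \<le> n \<and> A j = A i" and
      w: "w = (LEAST j. i < j \<and> j \<le> n \<and> A j = A i, k - 1)"
      using s im unfolding succA_def by (auto split: if_splits)
    have "i < (LEAST j. i < j \<and> j \<le> n \<and> A j = A i) \<and> (LEAST j. i < j \<and> j \<le> n \<and> A j = A i) \<le> n \<and> True"
      using LeastI_ex[OF ex] by simp
    then show ?thesis using w h k1 by (auto simp: dg_elems_def)
  qed
qed

context diag
begin

lemma W_correct:
  "p \<le> n * k \<Longrightarrow> length (W A n k p) = p \<and> (\<forall>q<p. W A n k p ! q \<in> E \<and> pos (W A n k p ! q) = Suc q)"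
proof (induction p)
  case 0 then show ?case by simp
next
  case (Suc p)
  let ?w = "W A n k p"
  have IH: "length ?w = p" "\<And>q. q < p \<Longrightarrow> ?w ! q \<in> E \<and> pos (?w ! q) = Suc q"
    using Suc by auto
  have setw: "v \<in> set ?w \<longleftrightarrow> v \<in> E \<and> pos v \<le> p" for v
  proof
    assume "v \<in> set ?w"
    then obtain q where "q < p" "v = ?w ! q" using IH(1) by (metis in_set_conv_nth)
    then show "v \<in> E \<and> pos v \<le> p" using IH(2) by auto
  next
    assume v: "v \<in> E \<and> pos v \<le> p"
    have q2: "1 \<le> pos v" using pos_range v by blast
    then have q: "pos v - 1 < p" "1 \<le> pos v" using v by linarith+
    then have "?w ! (pos v - 1) \<in> E" "pos (?w ! (pos v - 1)) = pos v" using IH(2) by auto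
    then have "?w ! (pos v - 1) = v" using pos_inj v by blast
    then show "v \<in> set ?w" using q IH(1) by (metis nth_mem)
  qed
  obtain e where e: "e \<in> E" "pos e = Suc p" using pos_surj[of "Suc p"] Suc.prems by auto
  have st: "stepW A n k ?w (Suc p) = e"
  proof (cases "isstart A n (Suc p)")
    case True
    then have "(firstl A n (Suc p), k - 1) = e" using start_elem[OF True] e pos_inj by metis
    then show ?thesis unfolding stepW_def using True by simp
  next
    case False
    then obtain u where ue: "(u, e) \<in> K" using nonstart_in[of e] e by auto
    have uE: "u \<in> E" using arc_E K_Arc ue by blast
    have pu: "pos u < Suc p" using arc_pos[OF K_Arc[OF ue]] e by simp
    have su: "succA A n k u = Some e" using succ_K[OF uE ue] .
    let ?P = "\<lambda>v. succA A n k v \<noteq> None \<and> the (succA A n k v) \<notin> set ?w"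
    have pu1: "1 \<le> pos u" using pos_range uE by simp
    have wu: "?w ! (pos u - 1) = u"
    proof -
      have "?w ! (pos u - 1) \<in> E" "pos (?w ! (pos u - 1)) = pos u" using IH(2)[of "pos u - 1"] pu pu1 by auto
      then show ?thesis using pos_inj uE by blast
    qed
    have Pu: "?P u" using su setw e by simp
    have notP: "\<forall>j<pos u - 1. \<not> ?P (?w ! j)"
    proof (intro allI impI notI)
      fix j assume j: "j < pos u - 1" and Pv: "?P (?w ! j)"
      let ?v = "?w ! j"
      have v: "?v \<in> E" "pos ?v = Suc j" using IH(2)[of j] j pu by auto
      obtain w' where vw': "(?v, w') \<in> K" using succ_ex[OF v(1)] Pv by blast
      have sv: "succA A n k ?v = Some w'" using succ_K[OF v(1) vw'] .
      have w'E: "w' \<in> E" using arc_E K_Arc vw' by blast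
      have "w' \<notin> set ?w" using Pv sv by simp
      then have pw': "pos w' > p" using setw w'E by auto
      have "w' \<noteq> e"
      proof
        assume "w' = e"
        then have "?v = u" using in_deg vw' ue by blast
        then show False using v j by simp
      qed
      then have "pos w' \<noteq> pos e" using pos_inj w'E e by blast
      then have "pos e \<le> pos w'" using pw' e by simp
      moreover have "pos ?v \<le> pos u" using v j by simp
      moreover have "(u, e) \<noteq> (?v, w')" using \<open>w' \<noteq> e\<close> by simp
      moreover have "(u, e) \<in> Arc" using K_Arc ue by blast
      ultimately show False using vw' unfolding kept_iff by blast
    qed
    have il: "pos u - 1 < length ?w" using pu pu1 IH(1) by linarith
    have "hd (filter ?P ?w) = ?w ! (pos u - 1)"
      by (rule hd_filter_nth[OF il]) (use Pu wu notP in simp_all)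
    then have "hd (pend A n k ?w) = u" unfolding pend_def using wu by simp
    then show ?thesis unfolding stepW_def using False su by simp
  qed
  show ?case
  proof
    show "length (W A n k (Suc p)) = Suc p" using IH(1) by simp
    show "\<forall>q<Suc p. W A n k (Suc p) ! q \<in> E \<and> pos (W A n k (Suc p) ! q) = Suc q"
    proof (intro allI impI)
      fix q assume q: "q < Suc p"
      show "W A n k (Suc p) ! q \<in> E \<and> pos (W A n k (Suc p) ! q) = Suc q"
      proof (cases "q < p")
        case True then show ?thesis using IH by (simp add: nth_append)
      next
        case False
        then have "q = p" using q by simp
        then show ?thesis using IH(1) st e by (simp add: nth_append)
      qed
    qed
  qed
qed

lemma W_pos: assumes e: "e \<in> E" shows "W A n k (n * k) ! (pos e - 1) = e"
proof -
  have r: "1 \<le> pos e" "pos e \<le> n * k" using pos_range e by auto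
  then have "W A n k (n * k) ! (pos e - 1) \<in> E \<and> pos (W A n k (n * k) ! (pos e - 1)) = pos e"
    using W_correct[of "n * k"] by auto
  then show ?thesis using pos_inj e by blast
qed

lemma long_iff:
  assumes ij: "1 \<le> i" "i < j" "j \<le> n"
  shows "x i - x j > real k \<longleftrightarrow>
    (\<exists>e\<in>E. \<exists>w. succA A n k e = Some w \<and> pos (i, 0) \<le> pos e \<and> pos w \<le> pos (j, k - 1))"
proof
  assume xl: "x i - x j > real k"
  let ?a = "((i, 0), (j, k - 1))"
  have aA: "?a \<in> Arc" unfolding arc_cases using ij xl by auto
  let ?In = "\<lambda>pq. pq \<in> Arc \<and> pos (i, 0) \<le> pos (fst pq) \<and> pos (snd pq) \<le> pos (j, k - 1)"
  have "?In ?a" using aA by simp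
  then obtain pq where pq: "?In pq" and mn: "\<And>pq'. ?In pq' \<Longrightarrow> pos (snd pq) - pos (fst pq) \<le> pos (snd pq') - pos (fst pq')"
    using ex_has_least_nat[of ?In ?a "\<lambda>pq. pos (snd pq) - pos (fst pq)"] by blast
  obtain p q where pqd: "pq = (p, q)" by (cases pq) blast
  have pqK: "(p, q) \<in> K"
    unfolding kept_iff
  proof
    show "(p, q) \<in> Arc" using pq pqd by simp
    show "\<not> (\<exists>p' q'. (p', q') \<in> Arc \<and> (p', q') \<noteq> (p, q) \<and> pos p \<le> pos p' \<and> pos q' \<le> pos q)"
    proof
      assume "\<exists>p' q'. (p', q') \<in> Arc \<and> (p', q') \<noteq> (p, q) \<and> pos p \<le> pos p' \<and> pos q' \<le> pos q"
      then obtain p' q' where b: "(p', q') \<in> Arc" "(p', q') \<noteq> (p, q)" "pos p \<le> pos p'" "pos q' \<le> pos q"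
        by blast
      have "?In (p', q')" using b pq pqd by auto
      then have "pos q - pos p \<le> pos q' - pos p'" using mn pqd by fastforce
      moreover have "pos p < pos q" using arc_pos pq pqd by simp
      moreover have "pos p' < pos q'" using arc_pos b(1) by simp
      ultimately have "pos p = pos p'" "pos q = pos q'" using b by linarith+
      moreover have "(p, q) \<in> Arc" using pq pqd by simp
      then have "p \<in> E \<and> q \<in> E" by (rule arc_E)
      moreover have "p' \<in> E \<and> q' \<in> E" using b(1) by (rule arc_E)
      ultimately show False using pos_inj b(2) by blast
    qed
  qed
  have pE: "p \<in> E" using arc_E K_Arc pqK by blast
  show "\<exists>e\<in>E. \<exists>w. succA A n k e = Some w \<and> pos (i, 0) \<le> pos e \<and> pos w \<le> pos (j, k - 1)"
  proof -
    have "succA A n k p = Some q" using succ_K[OF pE pqK] .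
    moreover have "pos (i, 0) \<le> pos p" "pos q \<le> pos (j, k - 1)" using pq pqd by simp_all
    ultimately show ?thesis using pE by blast
  qed
next
  assume "\<exists>e\<in>E. \<exists>w. succA A n k e = Some w \<and> pos (i, 0) \<le> pos e \<and> pos w \<le> pos (j, k - 1)"
  then obtain e w where ew: "e \<in> E" "succA A n k e = Some w" "pos (i, 0) \<le> pos e" "pos w \<le> pos (j, k - 1)"
    by blast
  obtain w' where ew': "(e, w') \<in> K" using succ_ex[OF ew(1)] ew(2) by blast
  then have "w' = w" using succ_K[OF ew(1)] ew(2) by simp
  then have a: "(e, w) \<in> Arc" using K_Arc ew' by simp
  have E2: "w \<in> E" "(i, 0) \<in> E" "(j, k - 1) \<in> E" using arc_E a ij k1 by (auto simp: E_iff)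
  have "val e \<le> val (i, 0)" using pos_le_iff ew(1,3) E2 by blast
  moreover have "val (j, k - 1) \<le> val w" using pos_le_iff ew(4) E2 by blast
  moreover have "val e - val w \<ge> 1" using arc_val a .
  ultimately have "x i - (x j + real (k - 1)) \<ge> 1" unfolding dg_val_def by simp
  then have "x i - x j \<ge> real k" using k1 by (simp add: of_nat_diff)
  moreover have "x i - x j \<noteq> of_int (int k)" using xneq[of i j "int k"] ij k1 by simp
  ultimately show "x i - x j > real k" by simp
qed

lemma cmp_iff:
  assumes ij: "1 \<le> i" "i \<le> n" "1 \<le> j" "j \<le> n" and l: "- int k + 1 \<le> l" "l \<le> int k - 1"
  shows "x i - x j > of_int l \<longleftrightarrow>
    (if 0 \<le> l then pos (i, 0) < pos (j, nat l) else pos (i, nat (- l)) < pos (j, 0))"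
proof (cases "0 \<le> l")
  case True
  have E2: "(i, 0) \<in> E" "(j, nat l) \<in> E" using ij l True k1 by (auto simp: E_iff)
  have "pos (i, 0) < pos (j, nat l) \<longleftrightarrow> x i > x j + real (nat l)"
    using pos_less_iff[OF E2] unfolding dg_val_def by simp
  also have "\<dots> \<longleftrightarrow> x i - x j > of_int l" using True by auto
  finally show ?thesis using True by simp
next
  case False
  have E2: "(i, nat (- l)) \<in> E" "(j, 0) \<in> E" using ij l False k1 by (auto simp: E_iff)
  have "pos (i, nat (- l)) < pos (j, 0) \<longleftrightarrow> x i + real (nat (- l)) > x j"
    using pos_less_iff[OF E2] unfolding dg_val_def by simp
  also have "\<dots> \<longleftrightarrow> x i - x j > of_int l" using False by auto
  finally show ?thesis using False by simp
qed

lemma parking: "k_parking n k (sigma_pt n k x)"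
proof -
  let ?a = "sigma_pt n k x"
  have len: "length ?a = n" unfolding sigma_pt_def by simp
  have ai: "?a ! i = A (Suc i)" if "i < n" for i
    unfolding A_def Aof_def by simp
  have Aval: "\<exists>e\<in>E. A i = pos e" if "1 \<le> i" "i \<le> n" for i
    using A_in[OF that] ch_E iE that by blast
  have pos1: "\<forall>v\<in>set ?a. 1 \<le> v"
  proof
    fix v assume "v \<in> set ?a"
    then obtain i where "i < n" "v = ?a ! i" using len by (metis in_set_conv_nth)
    then obtain e where "e \<in> E" "v = pos e" using ai Aval[of "Suc i"] by auto
    then show "1 \<le> v" using pos_range by simp
  qed
  have srt: "sort ?a ! c \<le> 1 + k * c" if c: "c < n" for c
  proof -
    let ?v = "sort ?a ! c"
    have "?v \<in> set ?a" using c len by (metis length_sort nth_mem set_sort)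
    then obtain i where i: "i < n" "?v = ?a ! i" using len by (metis in_set_conv_nth)
    then obtain e0 where e0: "e0 \<in> E" "?v = pos e0" using ai Aval[of "Suc i"] by auto
    have vr: "1 \<le> ?v" "?v \<le> n * k" using e0 pos_range by auto
    let ?P = "{e \<in> E. pos e < ?v}"
    have "pos ` ?P = {1..<?v}"
    proof
      show "pos ` ?P \<subseteq> {1..<?v}"
      proof
        fix q assume "q \<in> pos ` ?P"
        then obtain e where e: "e \<in> ?P" "q = pos e" by blast
        then have "1 \<le> pos e" using pos_range[of e] by blast
        then show "q \<in> {1..<?v}" using e by simp
      qed
      show "{1..<?v} \<subseteq> pos ` ?P"
      proof
        fix q assume "q \<in> {1..<?v}"
        then obtain e where "e \<in> E" "pos e = q" using pos_surj[of q] vr by auto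
        then have eP: "e \<in> ?P" using \<open>q \<in> {1..<?v}\<close> by simp
        have "q = pos e" using \<open>pos e = q\<close> by simp
        then show "q \<in> pos ` ?P" by (rule rev_image_eqI[OF eP])
      qed
    qed
    moreover have "inj_on pos ?P"
      using pos_bij unfolding bij_betw_def by (rule inj_on_subset[OF conjunct1]) blast
    ultimately have cP: "card ?P = ?v - 1" using card_image[of pos ?P] by simp
    let ?J = "{j. 1 \<le> j \<and> j \<le> n \<and> A j < ?v}"
    have sub: "?P \<subseteq> ?J \<times> {..<k}"
    proof
      fix e assume eP: "e \<in> ?P"
      obtain j m where jm: "e = (j, m)" by fastforce
      have h: "1 \<le> j" "j \<le> n" "m < k" using eP jm E_iff by auto
      have "A j \<le> pos e" using A_le[OF h(1,2)] copies_ch[OF h] jm by simp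
      then show "e \<in> ?J \<times> {..<k}" using eP jm h by auto
    qed
    have finJ: "finite ?J" by simp
    have "card ?P \<le> card (?J \<times> {..<k})" by (intro card_mono) (use sub finJ in auto)
    also have "\<dots> = card ?J * k" by (simp add: card_cartesian_product)
    finally have c1: "?v - 1 \<le> card ?J * k" using cP by simp
    have "?J = Suc ` {i. i < length ?a \<and> ?a ! i < ?v}"
    proof
      show "?J \<subseteq> Suc ` {i. i < length ?a \<and> ?a ! i < ?v}"
      proof
        fix j assume "j \<in> ?J"
        then have "j - 1 \<in> {i. i < length ?a \<and> ?a ! i < ?v}" "j = Suc (j - 1)" using len ai[of "j - 1"] by auto
        then show "j \<in> Suc ` {i. i < length ?a \<and> ?a ! i < ?v}" by blast
      qed
      show "Suc ` {i. i < length ?a \<and> ?a ! i < ?v} \<subseteq> ?J" using len ai by auto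
    qed
    then have "card ?J = card {i. i < length ?a \<and> ?a ! i < ?v}" by (simp add: card_image)
    also have "\<dots> \<le> c" using sort_count_less[of c ?a] c len by simp
    finally have "card ?J \<le> c" .
    then have "card ?J * k \<le> c * k" by (rule mult_right_mono) simp
    then have "?v \<le> 1 + c * k" using c1 by linarith
    then show ?thesis by (simp add: mult.commute)
  qed
  show ?thesis unfolding k_parking_def using len pos1 srt by simp
qed

end

lemma sigma_inj:
  assumes k1: "1 \<le> k" and x: "x \<in> shi_complement n k" and y: "y \<in> shi_complement n k"
    and eq: "sigma_pt n k x = sigma_pt n k y"
  shows "same n k x y"
proof -
  interpret X: diag n k x using k1 x by unfold_locales
  interpret Y: diag n k y using k1 y by unfold_locales
  have AA: "X.A = Y.A" unfolding X.A_def Y.A_def eq ..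
  have pe: "dg_pos n k x e = dg_pos n k y e" if e: "e \<in> dg_elems n k" for e
  proof -
    have r: "1 \<le> dg_pos n k x e" "dg_pos n k x e \<le> n * k" using X.pos_range e by auto
    have w: "W X.A n k (n * k) ! (dg_pos n k x e - 1) = e" using X.W_pos e .
    have "dg_pos n k y (W Y.A n k (n * k) ! (dg_pos n k x e - 1)) = Suc (dg_pos n k x e - 1)"
      using Y.W_correct[of "n * k"] r by simp
    then show ?thesis using w AA r by simp
  qed
  show ?thesis unfolding same_def
  proof (intro allI impI)
    fix i j l assume h: "1 \<le> i \<and> i < j \<and> j \<le> n \<and> - int k + 1 \<le> l \<and> l \<le> int k"
    show "x i - x j > of_int l \<longleftrightarrow> y i - y j > of_int l"
    proof (cases "l = int k")
      case True
      have Eij: "(i, 0) \<in> dg_elems n k" "(j, k - 1) \<in> dg_elems n k" using h k1 by (auto simp: dg_elems_def)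
      have eqv: "(dg_pos n k x (i, 0) \<le> dg_pos n k x e \<and> dg_pos n k x w \<le> dg_pos n k x (j, k - 1)) \<longleftrightarrow>
                 (dg_pos n k y (i, 0) \<le> dg_pos n k y e \<and> dg_pos n k y w \<le> dg_pos n k y (j, k - 1))"
        if "e \<in> dg_elems n k" "succA X.A n k e = Some w" for e w
      proof -
        have "w \<in> dg_elems n k" using succA_E[OF k1 that] .
        then show ?thesis using pe that(1) Eij by simp
      qed
      have "x i - x j > real k \<longleftrightarrow> y i - y j > real k"
      proof -
        have "x i - x j > real k \<longleftrightarrow> (\<exists>e\<in>dg_elems n k. \<exists>w. succA X.A n k e = Some w \<and>
             dg_pos n k x (i, 0) \<le> dg_pos n k x e \<and> dg_pos n k x w \<le> dg_pos n k x (j, k - 1))"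
          using X.long_iff h by simp
        also have "\<dots> \<longleftrightarrow> (\<exists>e\<in>dg_elems n k. \<exists>w. succA X.A n k e = Some w \<and>
             dg_pos n k y (i, 0) \<le> dg_pos n k y e \<and> dg_pos n k y w \<le> dg_pos n k y (j, k - 1))"
          using eqv by blast
        also have "\<dots> \<longleftrightarrow> y i - y j > real k"
          using Y.long_iff h AA by simp
        finally show ?thesis .
      qed
      then show ?thesis using True by simp
    next
      case False
      then have l: "l \<le> int k - 1" using h by simp
      have c1: "x i - x j > of_int l \<longleftrightarrow>
        (if 0 \<le> l then dg_pos n k x (i, 0) < dg_pos n k x (j, nat l) else dg_pos n k x (i, nat (- l)) < dg_pos n k x (j, 0))"
        using X.cmp_iff[of i j l] h l by simp
      have c2: "y i - y j > of_int l \<longleftrightarrow>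
        (if 0 \<le> l then dg_pos n k y (i, 0) < dg_pos n k y (j, nat l) else dg_pos n k y (i, nat (- l)) < dg_pos n k y (j, 0))"
        using Y.cmp_iff[of i j l] h l by simp
      have E4: "(i, 0) \<in> dg_elems n k" "(j, 0) \<in> dg_elems n k" using h k1 by (auto simp: dg_elems_def)
      show ?thesis
      proof (cases "0 \<le> l")
        case True
        have "(j, nat l) \<in> dg_elems n k" using h l True by (auto simp: dg_elems_def)
        then show ?thesis using c1 c2 True pe E4 by simp
      next
        case False
        have "(i, nat (- l)) \<in> dg_elems n k" using h l False by (auto simp: dg_elems_def)
        then show ?thesis using c1 c2 False pe E4 by simp
      qed
    qed
  qed
qed

lemma sigma_same:
  assumes k1: "1 \<le> k" and x: "x \<in> shi_complement n k" and y: "y \<in> shi_complement n k"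
    and s: "same n k x y"
  shows "sigma_pt n k x = sigma_pt n k y"
proof -
  interpret X: diag n k x using k1 x by unfold_locales
  interpret Y: diag n k y using k1 y by unfold_locales
  have vc: "dg_val x p < dg_val x q \<longleftrightarrow> dg_val y p < dg_val y q"
    if p: "p \<in> dg_elems n k" and q: "q \<in> dg_elems n k" for p q
  proof -
    obtain i m where pp: "p = (i, m)" by fastforce
    obtain j m' where qq: "q = (j, m')" by fastforce
    have h: "1 \<le> i" "i \<le> n" "m < k" "1 \<le> j" "j \<le> n" "m' < k" using p q pp qq by (auto simp: dg_elems_def)
    have vx: "dg_val x p < dg_val x q \<longleftrightarrow> x i + real m < x j + real m'" using pp qq by (simp add: dg_val_def)
    have vy: "dg_val y p < dg_val y q \<longleftrightarrow> y i + real m < y j + real m'" using pp qq by (simp add: dg_val_def)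
    consider "i = j" | "i < j" | "j < i" by linarith
    then show ?thesis
    proof cases
      case 1 then show ?thesis using vx vy by simp
    next
      case 2
      let ?l = "int m' - int m"
      have lr: "- int k + 1 \<le> ?l" "?l \<le> int k" using h by auto
      have sx: "x i - x j > of_int ?l \<longleftrightarrow> y i - y j > of_int ?l" using s 2 h lr unfolding same_def by blast
      have nx: "x i - x j \<noteq> of_int ?l" using X.xneq[of i j ?l] 2 h lr by simp
      have ny: "y i - y j \<noteq> of_int ?l" using Y.xneq[of i j ?l] 2 h lr by simp
      have "x i + real m < x j + real m' \<longleftrightarrow> \<not> (x i - x j > of_int ?l)" using nx by auto
      moreover have "y i + real m < y j + real m' \<longleftrightarrow> \<not> (y i - y j > of_int ?l)" using ny by auto
      ultimately show ?thesis using vx vy sx by simp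
    next
      case 3
      let ?l = "int m - int m'"
      have lr: "- int k + 1 \<le> ?l" "?l \<le> int k" using h by auto
      have sx: "x j - x i > of_int ?l \<longleftrightarrow> y j - y i > of_int ?l" using s 3 h lr unfolding same_def by blast
      have "x i + real m < x j + real m' \<longleftrightarrow> x j - x i > of_int ?l" by auto
      moreover have "y i + real m < y j + real m' \<longleftrightarrow> y j - y i > of_int ?l" by auto
      ultimately show ?thesis using vx vy sx by simp
    qed
  qed
  have pe: "dg_pos n k x p = dg_pos n k y p" if p: "p \<in> dg_elems n k" for p
  proof -
    have "{q \<in> dg_elems n k. dg_val x q > dg_val x p} = {q \<in> dg_elems n k. dg_val y q > dg_val y p}"
      using vc p by blast
    then show ?thesis unfolding dg_pos_def by simp
  qed
  have ae: "dg_arcs n k x = dg_arcs n k y"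
  proof -
    have "x i - x j > real k \<longleftrightarrow> y i - y j > real k" if "1 \<le> i" "i < j" "j \<le> n" for i j
    proof -
      have "- int k + 1 \<le> int k" using k1 by simp
      then have "x i - x j > of_int (int k) \<longleftrightarrow> y i - y j > of_int (int k)"
        using s[unfolded same_def, rule_format, of i j "int k"] that by simp
      then show ?thesis by simp
    qed
    then show ?thesis unfolding dg_arcs_def by blast
  qed
  have ke: "dg_kept_arcs n k x = dg_kept_arcs n k y"
  proof -
    have "(p, q) \<in> dg_kept_arcs n k x \<longleftrightarrow> (p, q) \<in> dg_kept_arcs n k y" for p q
    proof -
      have "(p, q) \<in> dg_kept_arcs n k x \<longleftrightarrow> (p, q) \<in> dg_arcs n k x \<and>
        \<not> (\<exists>p' q'. (p', q') \<in> dg_arcs n k x \<and> (p', q') \<noteq> (p, q) \<and> dg_pos n k x p \<le> dg_pos n k x p' \<and> dg_pos n k x q' \<le> dg_pos n k x q)"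
        by (rule X.kept_iff)
      also have "\<dots> \<longleftrightarrow> (p, q) \<in> dg_arcs n k y \<and>
        \<not> (\<exists>p' q'. (p', q') \<in> dg_arcs n k y \<and> (p', q') \<noteq> (p, q) \<and> dg_pos n k y p \<le> dg_pos n k y p' \<and> dg_pos n k y q' \<le> dg_pos n k y q)"
      proof -
        have "dg_pos n k x p' = dg_pos n k y p' \<and> dg_pos n k x q' = dg_pos n k y q'"
          if "(p', q') \<in> dg_arcs n k x" for p' q'
          using X.arc_E[OF that] pe by simp
        moreover have "(p, q) \<in> dg_arcs n k x \<Longrightarrow> dg_pos n k x p = dg_pos n k y p \<and> dg_pos n k x q = dg_pos n k y q"
          using X.arc_E pe by simp
        ultimately show ?thesis using ae by metis
      qed
      also have "\<dots> \<longleftrightarrow> (p, q) \<in> dg_kept_arcs n k y" by (rule Y.kept_iff[symmetric])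
      finally show ?thesis .
    qed
    then show ?thesis by auto
  qed
  have ce: "dg_chain n k x = dg_chain n k y" unfolding dg_chain_def ke ..
  have "Min (dg_pos n k x ` dg_chain n k x (i, 0)) = Min (dg_pos n k y ` dg_chain n k y (i, 0))"
    if "i \<in> set [1..<n+1]" for i
  proof -
    have "(i, 0) \<in> dg_elems n k" using that k1 by (auto simp: dg_elems_def)
    then have "dg_chain n k x (i, 0) \<subseteq> dg_elems n k" using X.ch_E by blast
    then have "dg_pos n k x ` dg_chain n k x (i, 0) = dg_pos n k y ` dg_chain n k x (i, 0)"
      using pe by (intro image_cong) auto
    then show ?thesis using ce by simp
  qed
  then show ?thesis unfolding sigma_pt_def by (intro map_cong) auto
qed

lemma regions_eq: "shi_regions n k = (\<lambda>x. {y \<in> shi_complement n k. same n k x y}) ` shi_complement n k"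
proof -
  have "{connected_component_set (shi_complement n k) x | x. x \<in> shi_complement n k}
     = (\<lambda>x. connected_component_set (shi_complement n k) x) ` shi_complement n k" by blast
  also have "\<dots> = (\<lambda>x. {y \<in> shi_complement n k. same n k x y}) ` shi_complement n k"
    using comp_eq by (intro image_cong) auto
  finally show ?thesis unfolding shi_regions_def .
qed

lemma main_from_surj:
  assumes k1: "1 \<le> k"
    and surj: "\<And>a. k_parking n k a \<Longrightarrow> \<exists>x\<in>shi_complement n k. sigma_pt n k x = a"
  shows "bij_betw (shi_sigma n k) (shi_regions n k) {a. k_parking n k a}"
proof -
  let ?cell = "\<lambda>x. {y \<in> shi_complement n k. same n k x y}"
  have sig: "shi_sigma n k (?cell x) = sigma_pt n k x" if x: "x \<in> shi_complement n k" for x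
  proof -
    have "x \<in> ?cell x" using x same_refl by simp
    then have "(SOME y. y \<in> ?cell x) \<in> ?cell x" by (rule someI[where P="\<lambda>y. y \<in> ?cell x"])
    then have "sigma_pt n k x = sigma_pt n k (SOME y. y \<in> ?cell x)" using sigma_same[OF k1 x] by blast
    then show ?thesis unfolding shi_sigma_def by simp
  qed
  show ?thesis unfolding bij_betw_def regions_eq
  proof
    show "inj_on (shi_sigma n k) (?cell ` shi_complement n k)"
    proof (rule inj_onI)
      fix R1 R2 assume R1: "R1 \<in> ?cell ` shi_complement n k" and R2: "R2 \<in> ?cell ` shi_complement n k"
        and e: "shi_sigma n k R1 = shi_sigma n k R2"
      obtain x1 where x1: "x1 \<in> shi_complement n k" "R1 = ?cell x1" using R1 by blast
      obtain x2 where x2: "x2 \<in> shi_complement n k" "R2 = ?cell x2" using R2 by blast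
      have "sigma_pt n k x1 = sigma_pt n k x2" using e x1 x2 sig by simp
      then have "same n k x1 x2" using sigma_inj[OF k1 x1(1) x2(1)] by simp
      then show "R1 = R2" using x1 x2 same_trans same_sym by blast
    qed
    show "shi_sigma n k ` ?cell ` shi_complement n k = {a. k_parking n k a}"
    proof
      show "shi_sigma n k ` ?cell ` shi_complement n k \<subseteq> {a. k_parking n k a}"
      proof
        fix a assume "a \<in> shi_sigma n k ` ?cell ` shi_complement n k"
        then obtain x where x: "x \<in> shi_complement n k" "a = shi_sigma n k (?cell x)" by blast
        interpret X: diag n k x using k1 x(1) by unfold_locales
        show "a \<in> {a. k_parking n k a}" using X.parking sig[OF x(1)] x(2) by simp
      qed
      show "{a. k_parking n k a} \<subseteq> shi_sigma n k ` ?cell ` shi_complement n k"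
      proof
        fix a assume "a \<in> {a. k_parking n k a}"
        then obtain x where x: "x \<in> shi_complement n k" "sigma_pt n k x = a" using surj by blast
        then have "a = shi_sigma n k (?cell x)" using sig by simp
        then show "a \<in> shi_sigma n k ` ?cell ` shi_complement n k" using x(1) by blast
      qed
    qed
  qed
qed

lemma hd_filter_ex:
  "filter P w \<noteq> [] \<Longrightarrow> \<exists>i<length w. hd (filter P w) = w ! i \<and> P (w ! i) \<and> (\<forall>j<i. \<not> P (w ! j))"
proof (induction w)
  case Nil then show ?case by simp
next
  case (Cons b w)
  show ?case
  proof (cases "P b")
    case True
    then show ?thesis by (intro exI[of _ 0]) simp
  next
    case False
    then have "filter P w \<noteq> []" using Cons.prems by simp
    then obtain i where i: "i < length w" "hd (filter P w) = w ! i" "P (w ! i)" "\<forall>j<i. \<not> P (w ! j)"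
      using Cons.IH by blast
    have "\<forall>j<Suc i. \<not> P ((b # w) ! j)"
    proof (intro allI impI)
      fix j assume "j < Suc i"
      then show "\<not> P ((b # w) ! j)" using i(4) False by (cases j) auto
    qed
    then show ?thesis using i False by (intro exI[of _ "Suc i"]) simp
  qed
qed

lemma W_take: "q \<le> p \<Longrightarrow> take q (W A n k p) = W A n k q"
proof (induction p)
  case 0 then show ?case by simp
next
  case (Suc p)
  have len: "length (W A n k p) = p" by (induction p) auto
  show ?case
  proof (cases "q = Suc p")
    case True
    then show ?thesis using len by simp
  next
    case False
    then have "q \<le> p" using Suc.prems by simp
    then show ?thesis using Suc.IH len by simp
  qed
qed

lemma W_len: "length (W A n k p) = p" by (induction p) auto

lemma W_nth: "q < p \<Longrightarrow> W A n k p ! q = stepW A n k (W A n k q) (Suc q)"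
proof -
  assume q: "q < p"
  have "W A n k p ! q = take (Suc q) (W A n k p) ! q" using q by simp
  also have "take (Suc q) (W A n k p) = W A n k (Suc q)" using W_take q by simp
  also have "W A n k (Suc q) ! q = stepW A n k (W A n k q) (Suc q)" using W_len[of A n k q] by (simp add: nth_append)
  finally show ?thesis .
qed

lemma card_A_list:
  assumes len: "length a = n"
  shows "card {j. 1 \<le> j \<and> j \<le> n \<and> P (Aof a j)} = card {i. i < length a \<and> P (a ! i)}"
proof -
  have "{j. 1 \<le> j \<and> j \<le> n \<and> P (Aof a j)} = Suc ` {i. i < length a \<and> P (a ! i)}"
  proof
    show "{j. 1 \<le> j \<and> j \<le> n \<and> P (Aof a j)} \<subseteq> Suc ` {i. i < length a \<and> P (a ! i)}"
    proof
      fix j assume j: "j \<in> {j. 1 \<le> j \<and> j \<le> n \<and> P (Aof a j)}"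
      then have "j - 1 \<in> {i. i < length a \<and> P (a ! i)}" using len unfolding Aof_def by auto
      moreover have "j = Suc (j - 1)" using j by auto
      ultimately show "j \<in> Suc ` {i. i < length a \<and> P (a ! i)}" by blast
    qed
    show "Suc ` {i. i < length a \<and> P (a ! i)} \<subseteq> {j. 1 \<le> j \<and> j \<le> n \<and> P (Aof a j)}"
      using len unfolding Aof_def by auto
  qed
  then show ?thesis by (simp add: card_image)
qed

locale pk =
  fixes n k :: nat and a :: "nat list"
  assumes k1: "1 \<le> k" and n1: "1 \<le> n" and park: "k_parking n k a"
begin

definition "A = Aof a"
abbreviation "N \<equiv> n * k"
abbreviation "E \<equiv> dg_elems n k"
abbreviation "succ \<equiv> succA A n k"
abbreviation "st \<equiv> isstart A n"
abbreviation "fl \<equiv> firstl A n"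

lemma len_a: "length a = n" using park unfolding k_parking_def by simp

lemma E_iff: "(i, m) \<in> E \<longleftrightarrow> 1 \<le> i \<and> i \<le> n \<and> m < k" unfolding dg_elems_def by auto

lemma A_nth: "1 \<le> j \<Longrightarrow> j \<le> n \<Longrightarrow> A j \<in> set a"
  unfolding A_def Aof_def using len_a by simp

lemma A_ge1: "1 \<le> j \<Longrightarrow> j \<le> n \<Longrightarrow> 1 \<le> A j"
  using A_nth park unfolding k_parking_def by blast

lemma A_leN: assumes j: "1 \<le> j" "j \<le> n" shows "A j \<le> N"
proof -
  have "A j \<in> set (sort a)" using A_nth[OF j] by simp
  then obtain t where t: "t < length (sort a)" "A j = sort a ! t" by (metis in_set_conv_nth)
  have tn: "t \<le> n - 1" "n - 1 < length (sort a)" using t len_a n1 by auto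
  have "A j \<le> sort a ! (n - 1)" using t tn sorted_nth_mono[of "sort a" t "n - 1"] by simp
  also have "\<dots> \<le> 1 + k * (n - 1)" using park n1 unfolding k_parking_def by simp
  also have "\<dots> \<le> k + k * (n - 1)" using k1 by simp
  also have "\<dots> = N" using n1 by (cases n) (auto simp: algebra_simps)
  finally show ?thesis .
qed

lemma st_fl: assumes "st p" shows "1 \<le> fl p \<and> fl p \<le> n \<and> A (fl p) = p \<and> (\<forall>j. 1 \<le> j \<and> j \<le> n \<and> A j = p \<longrightarrow> fl p \<le> j)"
proof -
  have ex: "\<exists>i. 1 \<le> i \<and> i \<le> n \<and> A i = p" using assms unfolding isstart_def .
  show ?thesis unfolding firstl_def using LeastI_ex[OF ex] Least_le[of "\<lambda>i. 1 \<le> i \<and> i \<le> n \<and> A i = p"]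
    by blast
qed

lemma st_A: "1 \<le> j \<Longrightarrow> j \<le> n \<Longrightarrow> st (A j)" unfolding isstart_def by blast

lemma succ_cases:
  assumes e: "(i, m) \<in> E" and s: "succ (i, m) = Some w"
  shows "(0 < m \<and> w = (i, m - 1)) \<or>
    (m = 0 \<and> (\<exists>j. w = (j, k - 1) \<and> i < j \<and> j \<le> n \<and> A j = A i \<and> (\<forall>t. i < t \<and> t < j \<longrightarrow> A t \<noteq> A i)))"
proof (cases "0 < m")
  case True then show ?thesis using s unfolding succA_def by simp
next
  case False
  then have m0: "m = 0" by simp
  have ex: "\<exists>j. i < j \<and> j \<le> n \<and> A j = A i" and
    w: "w = (LEAST j. i < j \<and> j \<le> n \<and> A j = A i, k - 1)"
    using s m0 unfolding succA_def by (auto split: if_splits)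
  let ?j = "LEAST j. i < j \<and> j \<le> n \<and> A j = A i"
  have "i < ?j \<and> ?j \<le> n \<and> A ?j = A i" using LeastI_ex[OF ex] .
  moreover have "\<forall>t. i < t \<and> t < ?j \<longrightarrow> A t \<noteq> A i"
  proof (intro allI impI)
    fix t assume t: "i < t \<and> t < ?j"
    show "A t \<noteq> A i"
    proof
      assume "A t = A i"
      then have "?j \<le> t" using t calculation by (intro Least_le) auto
      then show False using t by simp
    qed
  qed
  ultimately show ?thesis using m0 w by blast
qed

lemma succ_E: "e \<in> E \<Longrightarrow> succ e = Some w \<Longrightarrow> w \<in> E"
  using succA_E k1 by blast

lemma succ_A: assumes e: "e \<in> E" and s: "succ e = Some w" shows "A (fst w) = A (fst e)"
proof -
  obtain i m where im: "e = (i, m)" by fastforce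
  show ?thesis using succ_cases[of i m w] e s im by auto
qed

lemma succ_fst: assumes e: "e \<in> E" and s: "succ e = Some w" shows "fst e \<le> fst w"
proof -
  obtain i m where im: "e = (i, m)" by fastforce
  show ?thesis using succ_cases[of i m w] e s im by auto
qed

lemma succ_inj: assumes e: "e \<in> E" "e' \<in> E" and s: "succ e = Some w" "succ e' = Some w"
  shows "e = e'"
proof -
  obtain i m where im: "e = (i, m)" by fastforce
  obtain i' m' where im': "e' = (i', m')" by fastforce
  have c1: "(0 < m \<and> w = (i, m - 1)) \<or>
    (m = 0 \<and> (\<exists>j. w = (j, k - 1) \<and> i < j \<and> j \<le> n \<and> A j = A i \<and> (\<forall>t. i < t \<and> t < j \<longrightarrow> A t \<noteq> A i)))"
    using succ_cases[of i m w] e s im by simp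
  have c2: "(0 < m' \<and> w = (i', m' - 1)) \<or>
    (m' = 0 \<and> (\<exists>j. w = (j, k - 1) \<and> i' < j \<and> j \<le> n \<and> A j = A i' \<and> (\<forall>t. i' < t \<and> t < j \<longrightarrow> A t \<noteq> A i')))"
    using succ_cases[of i' m' w] e s im' by simp
  have mk: "m < k" "m' < k" using e im im' E_iff by auto
  from c1 show ?thesis
  proof
    assume a1: "0 < m \<and> w = (i, m - 1)"
    from c2 show ?thesis
    proof
      assume "0 < m' \<and> w = (i', m' - 1)"
      then show ?thesis using a1 im im' by auto
    next
      assume "m' = 0 \<and> (\<exists>j. w = (j, k - 1) \<and> i' < j \<and> j \<le> n \<and> A j = A i' \<and> (\<forall>t. i' < t \<and> t < j \<longrightarrow> A t \<noteq> A i'))"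
      then have "m - 1 = k - 1" using a1 by auto
      then show ?thesis using a1 mk by linarith
    qed
  next
    assume a1: "m = 0 \<and> (\<exists>j. w = (j, k - 1) \<and> i < j \<and> j \<le> n \<and> A j = A i \<and> (\<forall>t. i < t \<and> t < j \<longrightarrow> A t \<noteq> A i))"
    then obtain j where j: "w = (j, k - 1)" "i < j" "j \<le> n" "A j = A i" "\<forall>t. i < t \<and> t < j \<longrightarrow> A t \<noteq> A i" by blast
    from c2 show ?thesis
    proof
      assume "0 < m' \<and> w = (i', m' - 1)"
      then have "m' - 1 = k - 1" using j by auto
      then show ?thesis using \<open>0 < m' \<and> w = (i', m' - 1)\<close> mk by linarith
    next
      assume "m' = 0 \<and> (\<exists>j. w = (j, k - 1) \<and> i' < j \<and> j \<le> n \<and> A j = A i' \<and> (\<forall>t. i' < t \<and> t < j \<longrightarrow> A t \<noteq> A i'))"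
      then obtain j' where j': "m' = 0" "w = (j', k - 1)" "i' < j'" "A j' = A i'" "\<forall>t. i' < t \<and> t < j' \<longrightarrow> A t \<noteq> A i'" by blast
      have jj: "j' = j" using j j' by simp
      have "i = i'"
      proof (rule ccontr)
        assume "i \<noteq> i'"
        then have "i < i' \<or> i' < i" by linarith
        then show False
        proof
          assume "i < i'" then show False using j(5) j'(3) jj j(4) j'(4) by auto
        next
          assume "i' < i" then show False using j'(5) j(2) jj j(4) j'(4) by auto
        qed
      qed
      then show ?thesis using im im' a1 j' by simp
    qed
  qed
qed

lemma succ_notstart: assumes e: "e \<in> E" and s: "succ e = Some w" and st: "st p" and w: "w = (fl p, k - 1)"
  shows False
proof -
  obtain i m where im: "e = (i, m)" by fastforce
  have flp: "1 \<le> fl p" "fl p \<le> n" "A (fl p) = p" "\<forall>j. 1 \<le> j \<and> j \<le> n \<and> A j = p \<longrightarrow> fl p \<le> j"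
    using st_fl[OF st] by auto
  have mk: "m < k" "1 \<le> i" "i \<le> n" using e im E_iff by auto
  have c: "(0 < m \<and> w = (i, m - 1)) \<or>
    (m = 0 \<and> (\<exists>j. w = (j, k - 1) \<and> i < j \<and> j \<le> n \<and> A j = A i \<and> (\<forall>t. i < t \<and> t < j \<longrightarrow> A t \<noteq> A i)))"
    using succ_cases[of i m w] e s im by simp
  from c show False
  proof
    assume "0 < m \<and> w = (i, m - 1)"
    then show False using w mk by auto
  next
    assume "m = 0 \<and> (\<exists>j. w = (j, k - 1) \<and> i < j \<and> j \<le> n \<and> A j = A i \<and> (\<forall>t. i < t \<and> t < j \<longrightarrow> A t \<noteq> A i))"
    then obtain j where j: "w = (j, k - 1)" "i < j" "A j = A i" by blast
    have "j = fl p" using j w by simp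
    then have "A i = p" using j flp by simp
    then have "fl p \<le> i" using flp mk by blast
    then show False using j \<open>j = fl p\<close> by simp
  qed
qed

definition "R = {(e, w). e \<in> E \<and> succ e = Some w}"

lemma R_star_E: "(e, w) \<in> R\<^sup>* \<Longrightarrow> e \<in> E \<Longrightarrow> w \<in> E \<and> A (fst w) = A (fst e)"
proof (induction rule: rtrancl_induct)
  case base then show ?case by simp
next
  case (step y z)
  then have y: "y \<in> E" "succ y = Some z" unfolding R_def by auto
  have "z \<in> E" using succ_E[OF y] .
  moreover have "A (fst z) = A (fst y)" using succ_A[OF y] .
  ultimately show ?case using step by simp
qed

lemma copies_R: assumes "1 \<le> j" "j \<le> n" "m < k" shows "((j, k - 1), (j, m)) \<in> R\<^sup>*"
  using assms(3)
proof (induction "k - 1 - m" arbitrary: m)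
  case 0
  then have "m = k - 1" by simp
  then show ?case by simp
next
  case (Suc d)
  then have m1: "Suc m < k" "d = k - 1 - Suc m" by auto
  then have IH: "((j, k - 1), (j, Suc m)) \<in> R\<^sup>*" using Suc.hyps(1) by blast
  have "((j, Suc m), (j, m)) \<in> R" unfolding R_def using assms m1 by (simp add: E_iff succA_def)
  with IH show ?case by (rule rtrancl_into_rtrancl)
qed

lemma reach: assumes j: "1 \<le> j" "j \<le> n" and m: "m < k"
  shows "((fl (A j), k - 1), (j, m)) \<in> R\<^sup>*"
proof -
  have "((fl (A j), k - 1), (j, k - 1)) \<in> R\<^sup>*" using j
  proof (induction j rule: less_induct)
    case (less j)
    let ?c = "A j"
    have fl: "1 \<le> fl ?c" "fl ?c \<le> n" "A (fl ?c) = ?c" "\<forall>t. 1 \<le> t \<and> t \<le> n \<and> A t = ?c \<longrightarrow> fl ?c \<le> t"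
      using st_fl[OF st_A[OF less.prems]] by auto
    show ?case
    proof (cases "fl ?c = j")
      case True then show ?thesis by simp
    next
      case False
      then have lt: "fl ?c < j" using fl less.prems by force
      let ?S = "{t. 1 \<le> t \<and> t < j \<and> A t = ?c}"
      have fin: "finite ?S" by simp
      have ne: "fl ?c \<in> ?S" using fl lt by simp
      let ?j' = "Max ?S"
      have j'S: "?j' \<in> ?S" using Max_in[OF fin] ne by blast
      have j'max: "\<And>t. t \<in> ?S \<Longrightarrow> t \<le> ?j'" using Max_ge[OF fin] by blast
      have j': "1 \<le> ?j'" "?j' < j" "A ?j' = ?c" using j'S by auto
      have IH: "((fl ?c, k - 1), (?j', k - 1)) \<in> R\<^sup>*"
        using less.IH[of ?j'] j' less.prems by simp
      have c2: "((?j', k - 1), (?j', 0)) \<in> R\<^sup>*" using copies_R[of ?j' 0] j' less.prems k1 by simp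
      have L: "(LEAST t. ?j' < t \<and> t \<le> n \<and> A t = A ?j') = j"
      proof (rule Least_equality)
        show "?j' < j \<and> j \<le> n \<and> A j = A ?j'" using j' less.prems by simp
      next
        fix t assume t: "?j' < t \<and> t \<le> n \<and> A t = A ?j'"
        show "j \<le> t"
        proof (rule ccontr)
          assume "\<not> j \<le> t"
          then have "t \<in> ?S" using t j' by simp
          then have "t \<le> ?j'" by (rule j'max)
          then show False using t by simp
        qed
      qed
      have "succ (?j', 0) = Some (j, k - 1)"
        unfolding succA_def using L j' less.prems by auto
      then have "((?j', 0), (j, k - 1)) \<in> R" unfolding R_def using j' less.prems k1 by (simp add: E_iff)
      then show ?thesis using IH c2 by (meson rtrancl_into_rtrancl rtrancl_trans)
    qed
  qed
  then show ?thesis using copies_R[OF j m] by (rule rtrancl_trans)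
qed

end

context pk
begin

lemma pend_hd: assumes "pend A n k w \<noteq> []"
  shows "hd (pend A n k w) \<in> set w \<and> succ (hd (pend A n k w)) \<noteq> None \<and> the (succ (hd (pend A n k w))) \<notin> set w"
proof -
  have "hd (pend A n k w) \<in> set (pend A n k w)" using assms by (rule hd_in_set)
  then show ?thesis unfolding pend_def by simp
qed

lemma Winv: "p \<le> N \<Longrightarrow> distinct (W A n k p) \<and> set (W A n k p) \<subseteq> E \<and>
   (\<forall>q<p. \<not> st (Suc q) \<longrightarrow> pend A n k (W A n k q) \<noteq> [])"
proof (induction p)
  case 0 then show ?case by simp
next
  case (Suc p)
  let ?w = "W A n k p"
  have IH: "distinct ?w" "set ?w \<subseteq> E" "\<And>q. q < p \<Longrightarrow> \<not> st (Suc q) \<Longrightarrow> pend A n k (W A n k q) \<noteq> []"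
    using Suc by auto
  have lw: "length ?w = p" by (rule W_len)
  have sub: "q \<le> p \<Longrightarrow> set (W A n k q) \<subseteq> set ?w" for q
    using W_take[of q p A n k] by (metis set_take_subset)
  have pendp: "pend A n k ?w \<noteq> []" if ns: "\<not> st (Suc p)"
  proof
    assume pe: "pend A n k ?w = []"
    have clos: "z \<in> set ?w" if "u \<in> set ?w" "succ u = Some z" for u z
    proof (rule ccontr)
      assume "z \<notin> set ?w"
      then have "u \<in> set (pend A n k ?w)" using that unfolding pend_def by simp
      then show False using pe by simp
    qed
    have starts: "(fl c, k - 1) \<in> set ?w" if c: "1 \<le> c" "c \<le> p" "st c" for c
    proof -
      have "?w ! (c - 1) = stepW A n k (W A n k (c - 1)) (Suc (c - 1))" using W_nth[of "c - 1" p] c by simp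
      also have "\<dots> = (fl c, k - 1)" unfolding stepW_def using c by simp
      finally have wc: "?w ! (c - 1) = (fl c, k - 1)" .
      have "c - 1 < length ?w" using c lw by simp
      then have "?w ! (c - 1) \<in> set ?w" by (rule nth_mem)
      then show ?thesis using wc by simp
    qed
    let ?J = "{j. 1 \<le> j \<and> j \<le> n \<and> A j \<le> p}"
    have Jsub: "?J \<times> {..<k} \<subseteq> set ?w"
    proof
      fix e assume "e \<in> ?J \<times> {..<k}"
      then obtain j m where jm: "e = (j, m)" "1 \<le> j" "j \<le> n" "A j \<le> p" "m < k" by auto
      have r: "((fl (A j), k - 1), (j, m)) \<in> R\<^sup>*" using reach jm by simp
      have s0: "(fl (A j), k - 1) \<in> set ?w" using starts[of "A j"] A_ge1 jm st_A by simp
      have "(j, m) \<in> set ?w" using r s0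
      proof (induction rule: rtrancl_induct)
        case base then show ?case by simp
      next
        case (step y z)
        then have "succ y = Some z" unfolding R_def by simp
        then show ?case using clos step by blast
      qed
      then show "e \<in> set ?w" using jm by simp
    qed
    have "card (?J \<times> {..<k}) \<le> card (set ?w)" by (intro card_mono) (use Jsub in auto)
    also have "\<dots> = p" using distinct_card IH(1) lw by metis
    finally have c1: "card ?J * k \<le> p" by (simp add: card_cartesian_product)
    have Jeq: "{j. 1 \<le> j \<and> j \<le> n \<and> A j \<le> Suc p} = ?J"
    proof -
      have "A j \<noteq> Suc p" if "1 \<le> j" "j \<le> n" for j using ns that unfolding isstart_def by blast
      then show ?thesis by fastforce
    qed
    have cardJ: "card ?J = card {i. i < length a \<and> a ! i \<le> Suc p}"
      using card_A_list[OF len_a, of "\<lambda>v. v \<le> Suc p"] Jeq unfolding A_def by simp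
    have "card ?J \<le> card {1..n}" by (intro card_mono) auto
    then have Cn: "card ?J \<le> n" by simp
    show False
    proof (cases "card ?J < n")
      case True
      let ?C = "card ?J"
      have "\<not> sort a ! ?C \<le> Suc p"
      proof
        assume "sort a ! ?C \<le> Suc p"
        then have "Suc ?C \<le> card {i. i < length a \<and> a ! i \<le> Suc p}"
          using sort_count_le[of ?C a "Suc p"] True len_a by simp
        then show False using cardJ by simp
      qed
      moreover have "sort a ! ?C \<le> 1 + k * ?C" using park True unfolding k_parking_def by blast
      ultimately have "p < k * ?C" by simp
      then show False using c1 by (simp add: mult.commute)
    next
      case False
      then have "card ?J = n" using Cn by simp
      then show False using c1 Suc.prems by (simp add: mult.commute)
    qed
  qed
  let ?e = "stepW A n k ?w (Suc p)"
  have eE: "?e \<in> E \<and> ?e \<notin> set ?w"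
  proof (cases "st (Suc p)")
    case True
    have fl: "1 \<le> fl (Suc p)" "fl (Suc p) \<le> n" "A (fl (Suc p)) = Suc p" using st_fl[OF True] by auto
    have e: "?e = (fl (Suc p), k - 1)" unfolding stepW_def using True by simp
    have "?e \<notin> set ?w"
    proof
      assume "?e \<in> set ?w"
      then obtain q where q: "q < p" "?w ! q = ?e" using lw by (metis in_set_conv_nth)
      have wq: "?w ! q = stepW A n k (W A n k q) (Suc q)" using W_nth q by simp
      show False
      proof (cases "st (Suc q)")
        case True
        then have "(fl (Suc q), k - 1) = (fl (Suc p), k - 1)" using wq q e unfolding stepW_def by simp
        then have "A (fl (Suc q)) = A (fl (Suc p))" by simp
        then show False using st_fl[OF True] fl q by simp
      next
        case False
        have pq: "pend A n k (W A n k q) \<noteq> []" using IH(3) q False by simp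
        let ?u = "hd (pend A n k (W A n k q))"
        have u: "?u \<in> set (W A n k q)" "succ ?u \<noteq> None" using pend_hd[OF pq] by auto
        have uE: "?u \<in> E" using u(1) sub[of q] q IH(2) by auto
        have "the (succ ?u) = ?e" using wq q False unfolding stepW_def by simp
        then have "succ ?u = Some ?e" using u(2) by auto
        then show False using succ_notstart[OF uE _ True e] by simp
      qed
    qed
    then show ?thesis using e fl k1 by (simp add: E_iff)
  next
    case False
    have pq: "pend A n k ?w \<noteq> []" using pendp False by simp
    let ?u = "hd (pend A n k ?w)"
    have u: "?u \<in> set ?w" "succ ?u \<noteq> None" "the (succ ?u) \<notin> set ?w" using pend_hd[OF pq] by auto
    have e: "?e = the (succ ?u)" unfolding stepW_def using False by simp
    have "succ ?u = Some ?e" using u(2) e by auto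
    then have "?e \<in> E" using succ_E u(1) IH(2) by blast
    then show ?thesis using u(3) e by simp
  qed
  have "distinct (W A n k (Suc p))" using IH(1) eE by simp
  moreover have "set (W A n k (Suc p)) \<subseteq> E" using IH(2) eE by simp
  moreover have "\<forall>q<Suc p. \<not> st (Suc q) \<longrightarrow> pend A n k (W A n k q) \<noteq> []"
  proof (intro allI impI)
    fix q assume "q < Suc p" "\<not> st (Suc q)"
    then show "pend A n k (W A n k q) \<noteq> []" using IH(3) pendp by (cases "q = p") auto
  qed
  ultimately show ?case by blast
qed

definition "WW = W A n k N"
definition "el p = WW ! (p - 1)"

lemma WW_props: "distinct WW" "set WW = E" "length WW = N"
proof -
  show d: "distinct WW" using Winv[of N] unfolding WW_def by simp
  show l: "length WW = N" unfolding WW_def by (rule W_len)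
  have s: "set WW \<subseteq> E" using Winv[of N] unfolding WW_def by simp
  have "card (set WW) = N" using distinct_card[OF d] l by simp
  then show "set WW = E" using s card_E[of n k] finite_E by (intro card_subset_eq) auto
qed

lemma el_bij: "bij_betw el {1..N} E"
proof -
  have inj: "inj_on el {1..N}"
  proof (rule inj_onI)
    fix p q assume p: "p \<in> {1..N}" and q: "q \<in> {1..N}" and e: "el p = el q"
    have "WW ! (p - 1) = WW ! (q - 1)" using e unfolding el_def .
    then have "p - 1 = q - 1" using WW_props p q nth_eq_iff_index_eq by fastforce
    then show "p = q" using p q by auto
  qed
  have "el ` {1..N} = set WW"
  proof
    show "el ` {1..N} \<subseteq> set WW"
    proof
      fix v assume "v \<in> el ` {1..N}"
      then obtain p where p: "p \<in> {1..N}" "v = el p" by blast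
      have "p - 1 < length WW" using p(1) WW_props(3) by auto
      then have "WW ! (p - 1) \<in> set WW" by (rule nth_mem)
      then show "v \<in> set WW" using p(2) unfolding el_def by simp
    qed
    show "set WW \<subseteq> el ` {1..N}"
    proof
      fix v assume "v \<in> set WW"
      then obtain i where i: "i < length WW" "WW ! i = v" by (metis in_set_conv_nth)
      then have "v = el (Suc i)" unfolding el_def by simp
      moreover have "Suc i \<in> {1..N}" using i(1) WW_props(3) by simp
      ultimately show "v \<in> el ` {1..N}" by blast
    qed
  qed
  then show ?thesis using inj WW_props unfolding bij_betw_def by simp
qed

definition "P = the_inv_into {1..N} el"

lemma P_el: "1 \<le> p \<Longrightarrow> p \<le> N \<Longrightarrow> P (el p) = p"
  unfolding P_def using el_bij the_inv_into_f_f unfolding bij_betw_def by fastforce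

lemma el_P: assumes "e \<in> E" shows "el (P e) = e" "1 \<le> P e" "P e \<le> N"
proof -
  show "el (P e) = e" unfolding P_def using el_bij assms f_the_inv_into_f_bij_betw by fastforce
  have "P e \<in> {1..N}" unfolding P_def using bij_betw_the_inv_into[OF el_bij] assms
    unfolding bij_betw_def by blast
  then show "1 \<le> P e" "P e \<le> N" by auto
qed

lemma el_E: "1 \<le> p \<Longrightarrow> p \<le> N \<Longrightarrow> el p \<in> E"
  using el_bij unfolding bij_betw_def by auto

lemma P_inj: "e \<in> E \<Longrightarrow> e' \<in> E \<Longrightarrow> P e = P e' \<Longrightarrow> e = e'"
  using el_P by metis

lemma W_set: assumes q: "q \<le> N" shows "v \<in> set (W A n k q) \<longleftrightarrow> v \<in> E \<and> P v \<le> q"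
proof -
  have t: "W A n k q = take q WW" unfolding WW_def using W_take q by simp
  show ?thesis
  proof
    assume "v \<in> set (W A n k q)"
    then obtain i where i: "i < q" "take q WW ! i = v" using t WW_props q by (metis in_set_conv_nth length_take min.absorb2)
    then have "v = el (Suc i)" unfolding el_def using q by simp
    moreover have "Suc i \<le> N" using i q by simp
    ultimately show "v \<in> E \<and> P v \<le> q" using P_el el_E i by auto
  next
    assume v: "v \<in> E \<and> P v \<le> q"
    have pv: "1 \<le> P v" "WW ! (P v - 1) = v" using el_P[of v] v unfolding el_def by auto
    have "P v - 1 < q" using pv(1) v by linarith
    then have "take q WW ! (P v - 1) = v" using pv(2) by simp
    moreover have "P v - 1 < length (take q WW)" using v el_P[of v] q WW_props by auto
    ultimately show "v \<in> set (W A n k q)" using t by (metis nth_mem)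
  qed
qed

lemma el_step: "q < N \<Longrightarrow> el (Suc q) = stepW A n k (W A n k q) (Suc q)"
  unfolding el_def WW_def using W_nth by simp

lemma st_el: "1 \<le> p \<Longrightarrow> p \<le> N \<Longrightarrow> st p \<Longrightarrow> el p = (fl p, k - 1)"
  using el_step[of "p - 1"] unfolding stepW_def by simp

lemma pend_ne: assumes "1 \<le> p" "p \<le> N" "\<not> st p" shows "pend A n k (W A n k (p - 1)) \<noteq> []"
proof -
  have a: "\<forall>q<N. \<not> st (Suc q) \<longrightarrow> pend A n k (W A n k q) \<noteq> []" using Winv[of N] by simp
  have "p - 1 < N" "Suc (p - 1) = p" using assms by auto
  then show ?thesis using a assms(3) by metis
qed

definition "src p = P (hd (pend A n k (W A n k (p - 1))))"

lemma ns_src: assumes p: "1 \<le> p" "p \<le> N" and ns: "\<not> st p"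
  shows "1 \<le> src p \<and> src p < p \<and> succ (el (src p)) = Some (el p)"
proof -
  have pq: "pend A n k (W A n k (p - 1)) \<noteq> []" using pend_ne[OF p ns] .
  let ?u = "hd (pend A n k (W A n k (p - 1)))"
  have u: "?u \<in> set (W A n k (p - 1))" "succ ?u \<noteq> None" using pend_hd[OF pq] by auto
  have uE: "?u \<in> E" "P ?u \<le> p - 1" using W_set[of "p - 1" ?u] u p by auto
  have "el p = the (succ ?u)" using el_step[of "p - 1"] p ns unfolding stepW_def by simp
  then have "succ ?u = Some (el p)" using u(2) by auto
  then show ?thesis unfolding src_def using uE el_P[OF uE(1)] p by auto
qed

lemma fifo: assumes rq: "1 \<le> r" "r < q" "q \<le> N" and nr: "\<not> st r" and nq: "\<not> st q"
  shows "src r < src q"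
proof -
  let ?wr = "W A n k (r - 1)" and ?wq = "W A n k (q - 1)"
  let ?Pr = "\<lambda>v. succ v \<noteq> None \<and> the (succ v) \<notin> set ?wr"
  let ?Pq = "\<lambda>v. succ v \<noteq> None \<and> the (succ v) \<notin> set ?wq"
  have pr: "pend A n k ?wr \<noteq> []" using pend_ne[OF rq(1) _ nr] rq by simp
  have pq: "pend A n k ?wq \<noteq> []" using pend_ne[OF _ rq(3) nq] rq by simp
  obtain ir where ir: "ir < length ?wr" "hd (pend A n k ?wr) = ?wr ! ir" "?Pr (?wr ! ir)" "\<forall>j<ir. \<not> ?Pr (?wr ! j)"
    using hd_filter_ex[of ?Pr ?wr] pr unfolding pend_def by blast
  obtain iq where iq: "iq < length ?wq" "hd (pend A n k ?wq) = ?wq ! iq" "?Pq (?wq ! iq)" "\<forall>j<iq. \<not> ?Pq (?wq ! j)"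
    using hd_filter_ex[of ?Pq ?wq] pq unfolding pend_def by blast
  have lr: "length ?wr = r - 1" "length ?wq = q - 1" by (simp_all add: W_len)
  have tw: "\<And>t. t \<le> N \<Longrightarrow> W A n k t = take t WW" unfolding WW_def using W_take by simp
  have nthw: "\<And>t i. t \<le> N \<Longrightarrow> i < t \<Longrightarrow> W A n k t ! i = el (Suc i)"
    unfolding el_def using tw by simp
  have sr: "src r = Suc ir"
  proof -
    have "hd (pend A n k ?wr) = el (Suc ir)" using ir(1,2) nthw[of "r - 1" ir] lr rq by simp
    then show ?thesis unfolding src_def using P_el[of "Suc ir"] ir(1) lr rq by simp
  qed
  have sq: "src q = Suc iq"
  proof -
    have "hd (pend A n k ?wq) = el (Suc iq)" using iq(1,2) nthw[of "q - 1" iq] lr rq by simp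
    then show ?thesis unfolding src_def using P_el[of "Suc iq"] iq(1) lr rq by simp
  qed
  have subs: "set ?wr \<subseteq> set ?wq"
    using W_take[of "r - 1" "q - 1" A n k] rq by (metis diff_le_mono less_imp_le set_take_subset)
  have "ir < iq"
  proof (rule ccontr)
    assume "\<not> ir < iq"
    then have le: "iq \<le> ir" by simp
    have v: "?wq ! iq = ?wr ! iq" using nthw[of "q - 1" iq] nthw[of "r - 1" iq] le ir(1) lr rq by simp
    show False
    proof (cases "iq < ir")
      case True
      then have "\<not> ?Pr (?wr ! iq)" using ir(4) by simp
      then have "\<not> ?Pq (?wq ! iq)" using v subs by auto
      then show False using iq(3) by simp
    next
      case False
      then have eq: "iq = ir" using le by simp
      have "el r = the (succ (hd (pend A n k ?wr)))" using el_step[of "r - 1"] rq nr unfolding stepW_def by simp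
      moreover have "el r \<in> set ?wq" using W_set[of "q - 1" "el r"] el_E[of r] P_el[of r] rq by simp
      ultimately have "\<not> ?Pq (?wr ! ir)" using ir(2) by simp
      then show False using iq(3) v eq by simp
    qed
  qed
  then show ?thesis using sr sq by simp
qed

lemma arc_src: assumes e: "e \<in> E" and s: "succ e = Some w"
  shows "\<not> st (P w) \<and> src (P w) = P e"
proof -
  have wE: "w \<in> E" using succ_E[OF e s] .
  have t: "1 \<le> P w" "P w \<le> N" "el (P w) = w" using el_P[OF wE] by auto
  have ns: "\<not> st (P w)"
  proof
    assume "st (P w)"
    then have "w = (fl (P w), k - 1)" using st_el t by simp
    then show False using succ_notstart[OF e s \<open>st (P w)\<close>] by simp
  qed
  have "succ (el (src (P w))) = Some w" using ns_src[OF t(1,2) ns] t by simp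
  moreover have "el (src (P w)) \<in> E" using ns_src[OF t(1,2) ns] t el_E by simp
  ultimately have "el (src (P w)) = e" using succ_inj e s by blast
  then have "src (P w) = P e" using P_el ns_src[OF t(1,2) ns] t by (metis le_trans less_imp_le)
  then show ?thesis using ns by simp
qed

lemma start_pos: assumes j: "1 \<le> j" "j \<le> n" shows "P (fl (A j), k - 1) = A j"
proof -
  have "el (A j) = (fl (A j), k - 1)" using st_el[of "A j"] A_ge1 A_leN st_A j by simp
  then show ?thesis using P_el[of "A j"] A_ge1 A_leN j by metis
qed

lemma R_pos: "(e, w) \<in> R \<Longrightarrow> P e < P w"
proof -
  assume "(e, w) \<in> R"
  then have ew: "e \<in> E" "succ e = Some w" unfolding R_def by auto
  have wE: "w \<in> E" using succ_E[OF ew] .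
  have "src (P w) = P e" "\<not> st (P w)" using arc_src[OF ew] by auto
  then show ?thesis using ns_src[of "P w"] el_P[OF wE] by simp
qed

lemma Rstar_pos: "(e, w) \<in> R\<^sup>* \<Longrightarrow> P e \<le> P w"
proof (induction rule: rtrancl_induct)
  case base then show ?case by simp
next
  case (step y z) then show ?case using R_pos[of y z] by simp
qed

lemma class_pos: assumes j: "1 \<le> j" "j \<le> n" and m: "m < k" shows "A j \<le> P (j, m)"
  using Rstar_pos[OF reach[OF j m]] start_pos[OF j] by simp

end

context pk
begin

lemma st_1: "st 1"
proof -
  have "sort a ! 0 \<le> 1" using park n1 unfolding k_parking_def by fastforce
  moreover have "sort a ! 0 \<in> set a" using len_a n1 by (metis length_sort nth_mem set_sort less_le_trans zero_less_one)
  moreover have "\<forall>v\<in>set a. 1 \<le> v" using park unfolding k_parking_def by simp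
  ultimately have "1 \<in> set a" by (metis le_antisym)
  then obtain t where t: "t < n" "a ! t = 1" using len_a by (metis in_set_conv_nth)
  then have "A (Suc t) = 1" unfolding A_def Aof_def by simp
  then show ?thesis unfolding isstart_def using t by (intro exI[of _ "Suc t"]) simp
qed

definition "eps = 1 / (real N + 1)"

lemma Npos: "0 < real N + 1"
proof -
  have "0 \<le> real N" by (rule of_nat_0_le_iff)
  then show ?thesis by linarith
qed
lemma eps_pos: "0 < eps" unfolding eps_def using Npos by simp
lemma eps_le1: "eps \<le> 1" unfolding eps_def using Npos by simp
lemma Neps: "real N * eps < 1" unfolding eps_def using Npos by (simp add: field_simps)

lemma eps_pow_small: assumes "c \<le> N" shows "real c * eps ^ Suc L < eps ^ L"
proof -
  have e: "real c * eps ^ Suc L = (real c * eps) * eps ^ L" by (simp add: algebra_simps)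
  have c: "real c \<le> real N" using assms by (simp only: of_nat_le_iff)
  have "real c * eps \<le> real N * eps" using c eps_pos by (intro mult_right_mono) auto
  then have ce: "real c * eps < 1" using Neps by linarith
  have "(real c * eps) * eps ^ L < 1 * eps ^ L" using ce eps_pos by (intro mult_strict_right_mono) auto
  then show ?thesis using e by simp
qed

function lev :: "nat \<Rightarrow> nat" where
  "lev p = (if st p then (if p \<le> 1 then 0 else lev (p - 1))
    else if 1 \<le> src p \<and> src p < p then Suc (lev (src p)) else 0)"
  by pat_completeness auto
termination by (relation "Wellfounded.measure (\<lambda>p. p)") auto

declare lev.simps[simp del]

function phi :: "nat \<Rightarrow> real" where
  "phi p = (if st p then (if p \<le> 1 then eps else phi (p - 1) + eps ^ Suc (lev p))
    else if 1 \<le> src p \<and> src p < p then phi (src p) + (if snd (el (src p)) = 0 then eps ^ Suc (lev p) else 0) else 0)"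
  by pat_completeness auto
termination by (relation "Wellfounded.measure (\<lambda>p. p)") auto

declare phi.simps[simp del]

definition "tau p = real (lev p) + phi p"

lemma lev_st: "st p \<Longrightarrow> 2 \<le> p \<Longrightarrow> lev p = lev (p - 1)" by (subst lev.simps) simp
lemma phi_st: "st p \<Longrightarrow> 2 \<le> p \<Longrightarrow> phi p = phi (p - 1) + eps ^ Suc (lev p)" by (subst phi.simps) simp
lemma lev_1: "lev 1 = 0" using st_1 by (subst lev.simps) simp
lemma phi_1: "phi 1 = eps" using st_1 by (subst phi.simps) simp

lemma lev_ns: "1 \<le> p \<Longrightarrow> p \<le> N \<Longrightarrow> \<not> st p \<Longrightarrow> lev p = Suc (lev (src p))"
  using ns_src[of p] by (subst lev.simps) simp
lemma phi_ns: "1 \<le> p \<Longrightarrow> p \<le> N \<Longrightarrow> \<not> st p \<Longrightarrow>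
   phi p = phi (src p) + (if snd (el (src p)) = 0 then eps ^ Suc (lev p) else 0)"
  using ns_src[of p] by (subst phi.simps) simp

lemma phi_bounds: "1 \<le> p \<Longrightarrow> p \<le> N \<Longrightarrow> 0 < phi p \<and> phi p \<le> real p * eps"
proof (induction p rule: less_induct)
  case (less p)
  have pw: "eps ^ Suc (lev p) \<le> eps" using eps_pos eps_le1 by (simp add: power_le_one mult_left_le)
  have pw0: "0 < eps ^ Suc (lev p)" using eps_pos by simp
  show ?case
  proof (cases "st p")
    case True
    show ?thesis
    proof (cases "p \<le> 1")
      case True then show ?thesis using phi_1 less.prems eps_pos by simp
    next
      case False
      then have IH: "0 < phi (p - 1) \<and> phi (p - 1) \<le> real (p - 1) * eps" using less.IH[of "p - 1"] less.prems by simp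
      have "phi p = phi (p - 1) + eps ^ Suc (lev p)" using phi_st True False by simp
      moreover have "real (p - 1) * eps + eps = real p * eps" using False by (simp add: of_nat_diff algebra_simps)
      ultimately show ?thesis using IH pw pw0 by linarith
    qed
  next
    case False
    have s: "1 \<le> src p" "src p < p" using ns_src less.prems False by auto
    then have IH: "0 < phi (src p) \<and> phi (src p) \<le> real (src p) * eps" using less.IH[of "src p"] less.prems by simp
    have e: "phi p = phi (src p) + (if snd (el (src p)) = 0 then eps ^ Suc (lev p) else 0)" using phi_ns less.prems False by simp
    have "real (src p) * eps + eps \<le> real p * eps"
    proof -
      have "real (src p) + 1 \<le> real p" using s by simp
      then have "(real (src p) + 1) * eps \<le> real p * eps" using eps_pos by (intro mult_right_mono) auto
      then show ?thesis by (simp add: algebra_simps)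
    qed
    then show ?thesis using IH e pw pw0 by (cases "snd (el (src p)) = 0") auto
  qed
qed

lemma phi_lt1: "1 \<le> p \<Longrightarrow> p \<le> N \<Longrightarrow> phi p < 1"
proof -
  assume p: "1 \<le> p" "p \<le> N"
  then have "phi p \<le> real p * eps" using phi_bounds by simp
  also have "\<dots> \<le> real N * eps" using p(2) eps_pos by (intro mult_right_mono) (simp only: of_nat_le_iff, simp)
  finally show ?thesis using Neps by simp
qed

definition "LN r = {r'. 1 \<le> r' \<and> r' \<le> r \<and> \<not> st r'}"

lemma LN_fin: "finite (LN r)" unfolding LN_def by simp

lemma lev_last: "1 \<le> r \<Longrightarrow> r \<le> N \<Longrightarrow>
   (LN r = {} \<longrightarrow> lev r = 0 \<and> phi r = real r * eps) \<and>
   (LN r \<noteq> {} \<longrightarrow> lev r = lev (Max (LN r)) \<and> phi r = phi (Max (LN r)) + real (r - Max (LN r)) * eps ^ Suc (lev r))"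
proof (induction r rule: less_induct)
  case (less r)
  show ?case
  proof (cases "st r")
    case False
    then have "r \<in> LN r" unfolding LN_def using less.prems by simp
    moreover have "\<forall>r'\<in>LN r. r' \<le> r" unfolding LN_def by simp
    ultimately have "Max (LN r) = r" using LN_fin by (intro Max_eqI) auto
    moreover have "LN r \<noteq> {}" using \<open>r \<in> LN r\<close> by blast
    ultimately show ?thesis by simp
  next
    case True
    show ?thesis
    proof (cases "r \<le> 1")
      case True
      then have r1: "r = 1" using less.prems by simp
      have "LN r = {}" unfolding LN_def using r1 st_1 by auto
      then show ?thesis using r1 lev_1 phi_1 by simp
    next
      case False
      have LNeq: "LN r = LN (r - 1)"
      proof (rule set_eqI)
        fix r' show "r' \<in> LN r \<longleftrightarrow> r' \<in> LN (r - 1)"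
          unfolding LN_def using \<open>st r\<close> by (cases "r' = r") auto
      qed
      have IH: "(LN (r - 1) = {} \<longrightarrow> lev (r - 1) = 0 \<and> phi (r - 1) = real (r - 1) * eps) \<and>
        (LN (r - 1) \<noteq> {} \<longrightarrow> lev (r - 1) = lev (Max (LN (r - 1))) \<and>
          phi (r - 1) = phi (Max (LN (r - 1))) + real (r - 1 - Max (LN (r - 1))) * eps ^ Suc (lev (r - 1)))"
        using less.IH[of "r - 1"] less.prems False by simp
      have lr: "lev r = lev (r - 1)" using lev_st True False by simp
      have pr: "phi r = phi (r - 1) + eps ^ Suc (lev r)" using phi_st True False by simp
      show ?thesis
      proof (cases "LN (r - 1) = {}")
        case True
        have "real (r - 1) * eps + eps ^ Suc 0 = real r * eps" using False by (simp add: of_nat_diff algebra_simps)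
        then show ?thesis using True IH lr pr LNeq by simp
      next
        case ne: False
        let ?M = "Max (LN (r - 1))"
        have M: "?M \<le> r - 1" using Max_in[OF LN_fin ne] unfolding LN_def by simp
        have "real (r - 1 - ?M) * eps ^ Suc (lev r) + eps ^ Suc (lev r) = real (r - ?M) * eps ^ Suc (lev r)"
          using M False by (simp add: of_nat_diff algebra_simps)
        then show ?thesis using ne IH lr pr LNeq by simp
      qed
    qed
  qed
qed

lemma LN_max: assumes "LN r \<noteq> {}" shows "1 \<le> Max (LN r) \<and> Max (LN r) \<le> r \<and> \<not> st (Max (LN r))"
  using Max_in[OF LN_fin assms] unfolding LN_def by simp

lemma lev_mono_step: "2 \<le> q \<Longrightarrow> q \<le> N \<Longrightarrow> (\<And>p q'. 1 \<le> p \<Longrightarrow> p \<le> q' \<Longrightarrow> q' < q \<Longrightarrow> lev p \<le> lev q') \<Longrightarrow> lev (q - 1) \<le> lev q"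
proof -
  assume q: "2 \<le> q" "q \<le> N" and IH: "\<And>p q'. 1 \<le> p \<Longrightarrow> p \<le> q' \<Longrightarrow> q' < q \<Longrightarrow> lev p \<le> lev q'"
  show "lev (q - 1) \<le> lev q"
  proof (cases "st q")
    case True then show ?thesis using lev_st q by simp
  next
    case False
    have sq: "1 \<le> src q" "src q < q" using ns_src q False by auto
    have lq: "lev q = Suc (lev (src q))" using lev_ns q False by simp
    let ?r = "q - 1"
    have ll: "(LN ?r = {} \<longrightarrow> lev ?r = 0) \<and> (LN ?r \<noteq> {} \<longrightarrow> lev ?r = lev (Max (LN ?r)))"
      using lev_last[of ?r] q by simp
    show ?thesis
    proof (cases "LN ?r = {}")
      case True then show ?thesis using ll by simp
    next
      case ne: False
      let ?M = "Max (LN ?r)"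
      have M: "1 \<le> ?M" "?M \<le> ?r" "\<not> st ?M" using LN_max[OF ne] by auto
      have sM: "1 \<le> src ?M" "src ?M < ?M" using ns_src M q by auto
      have "src ?M < src q" using fifo[of ?M q] M q False by simp
      then have "lev (src ?M) \<le> lev (src q)" using IH[of "src ?M" "src q"] sM sq by simp
      moreover have "lev ?M = Suc (lev (src ?M))" using lev_ns M q by simp
      ultimately show ?thesis using ll ne lq by simp
    qed
  qed
qed

lemma lev_mono: "1 \<le> p \<Longrightarrow> p \<le> q \<Longrightarrow> q \<le> N \<Longrightarrow> lev p \<le> lev q"
proof (induction q arbitrary: p rule: less_induct)
  case (less q)
  show ?case
  proof (cases "p = q")
    case True then show ?thesis by simp
  next
    case False
    then have "p \<le> q - 1" "2 \<le> q" using less.prems by auto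
    then have "lev p \<le> lev (q - 1)" using less.IH[of "q - 1" p] less.prems by simp
    moreover have "lev (q - 1) \<le> lev q"
      using lev_mono_step[of q] less.prems \<open>2 \<le> q\<close> less.IH by simp
    ultimately show ?thesis by simp
  qed
qed

lemma gap: "1 \<le> p \<Longrightarrow> p < q \<Longrightarrow> q \<le> N \<Longrightarrow> lev p = lev q \<Longrightarrow> phi q - phi p \<ge> eps ^ Suc (lev q)"
proof (induction q arbitrary: p rule: less_induct)
  case (less q)
  let ?L = "lev q"
  have q2: "2 \<le> q" using less.prems by simp
  have h1: "p \<le> q - 1" "1 \<le> q - 1" "q - 1 \<le> N" "q - 1 \<le> q" using less.prems by auto
  have "lev p \<le> lev (q - 1)" using lev_mono[of p "q - 1"] h1 less.prems(1) by blast
  moreover have "lev (q - 1) \<le> lev q" using lev_mono[of "q - 1" q] h1 less.prems(3) by blast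
  ultimately have lq1: "lev (q - 1) = ?L" using less.prems(4) by simp
  have cons: "phi q - phi (q - 1) \<ge> eps ^ Suc ?L"
  proof (cases "st q")
    case True then show ?thesis using phi_st q2 by simp
  next
    case False
    let ?s = "src q"
    have sq: "1 \<le> ?s" "?s < q" using ns_src less.prems False by auto
    have lq: "?L = Suc (lev ?s)" using lev_ns less.prems False by simp
    let ?r = "q - 1"
    have ll: "(LN ?r = {} \<longrightarrow> lev ?r = 0) \<and>
      (LN ?r \<noteq> {} \<longrightarrow> lev ?r = lev (Max (LN ?r)) \<and> phi ?r = phi (Max (LN ?r)) + real (?r - Max (LN ?r)) * eps ^ Suc (lev ?r))"
      using lev_last[of ?r] q2 less.prems by simp
    have ne: "LN ?r \<noteq> {}" using ll lq1 lq by auto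
    let ?M = "Max (LN ?r)"
    have M: "1 \<le> ?M" "?M \<le> ?r" "\<not> st ?M" using LN_max[OF ne] by auto
    have sM: "1 \<le> src ?M" "src ?M < ?M" using ns_src M less.prems by auto
    have lM: "lev ?M = Suc (lev (src ?M))" using lev_ns M less.prems by simp
    have lsM: "lev (src ?M) = lev ?s" using lM ll ne lq1 lq by simp
    have fi: "src ?M < ?s" using fifo[of ?M q] M less.prems False by simp
    have g1: "phi ?s - phi (src ?M) \<ge> eps ^ Suc (lev ?s)"
      using less.IH[of ?s "src ?M"] sq sM fi lsM less.prems by simp
    have pM: "phi ?M \<le> phi (src ?M) + eps ^ Suc ?L"
      using phi_ns[of ?M] M less.prems lM lsM lq eps_pos by (auto simp del: power_Suc)
    have pq: "phi q \<ge> phi ?s" using phi_ns[of q] less.prems False eps_pos by simp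
    have pr: "phi ?r = phi ?M + real (?r - ?M) * eps ^ Suc ?L" using ll ne lq1 by simp
    have cnt: "real (?r - ?M) + 1 \<le> real (N - 1)" using M less.prems by (simp add: of_nat_diff)
    have "real (?r - ?M + 1) * eps ^ Suc ?L + eps ^ Suc ?L \<le> eps ^ ?L"
    proof -
      have "?r - ?M + 1 + 1 \<le> N" using M less.prems by simp
      then have "real (?r - ?M + 1 + 1) * eps ^ Suc ?L < eps ^ ?L" by (rule eps_pow_small)
      then show ?thesis by (simp add: algebra_simps)
    qed
    then show ?thesis using g1 pM pq pr lq by (simp add: algebra_simps)
  qed
  show ?case
  proof (cases "p = q - 1")
    case True then show ?thesis using cons by simp
  next
    case False
    then have "p < q - 1" using less.prems by simp
    then have "phi (q - 1) - phi p \<ge> eps ^ Suc (lev (q - 1))"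
      using less.IH[of "q - 1" p] less.prems lq1 by simp
    moreover have "0 < eps ^ Suc ?L" using eps_pos by simp
    ultimately show ?thesis using cons lq1 by simp
  qed
qed

lemma tau_mono: assumes "1 \<le> p" "p < q" "q \<le> N" shows "tau p < tau q"
proof -
  have l: "lev p \<le> lev q" using lev_mono assms by simp
  show ?thesis
  proof (cases "lev p = lev q")
    case True
    then have "phi q - phi p \<ge> eps ^ Suc (lev q)" using gap assms by simp
    moreover have "0 < eps ^ Suc (lev q)" using eps_pos by simp
    ultimately show ?thesis unfolding tau_def using True by simp
  next
    case False
    then have "real (lev p) + 1 \<le> real (lev q)" using l by simp
    moreover have "phi p < 1" using phi_lt1 assms by simp
    moreover have "0 < phi q" using phi_bounds assms by simp
    ultimately show ?thesis unfolding tau_def by simp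
  qed
qed

lemma tau_arc: assumes t: "1 \<le> t" "t \<le> N" "\<not> st t"
  shows "tau t - tau (src t) = 1 + (if snd (el (src t)) = 0 then eps ^ Suc (lev t) else 0)"
  unfolding tau_def using lev_ns[OF t] phi_ns[OF t] by simp

lemma semiorder:
  assumes pq: "1 \<le> p" "p < q" "q \<le> N"
    and noarc: "\<And>t. 1 \<le> t \<Longrightarrow> t \<le> N \<Longrightarrow> \<not> st t \<Longrightarrow> p \<le> src t \<Longrightarrow> t \<le> q \<Longrightarrow> False"
  shows "tau q - tau p < 1"
proof (cases "lev q = lev p")
  case True
  have "phi q < 1" "0 < phi p" using phi_lt1 phi_bounds pq by auto
  then show ?thesis unfolding tau_def using True by simp
next
  case False
  then have gt: "lev p < lev q" using lev_mono[of p q] pq by simp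
  let ?L = "lev q"
  have ll: "(LN q = {} \<longrightarrow> lev q = 0) \<and>
      (LN q \<noteq> {} \<longrightarrow> lev q = lev (Max (LN q)) \<and> phi q = phi (Max (LN q)) + real (q - Max (LN q)) * eps ^ Suc (lev q))"
    using lev_last[of q] pq by simp
  have ne: "LN q \<noteq> {}" using ll gt by auto
  let ?M = "Max (LN q)"
  have M: "1 \<le> ?M" "?M \<le> q" "\<not> st ?M" using LN_max[OF ne] by auto
  have Mp: "p < ?M"
  proof (rule ccontr)
    assume "\<not> p < ?M"
    then have "lev ?M \<le> lev p" using lev_mono[of ?M p] M pq by simp
    then show False using ll ne gt by simp
  qed
  have sM: "1 \<le> src ?M" "src ?M < ?M" using ns_src M pq by auto
  have sp: "src ?M < p"
  proof (rule ccontr)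
    assume "\<not> src ?M < p"
    then show False using noarc[of ?M] M pq by simp
  qed
  have lM: "lev ?M = Suc (lev (src ?M))" using lev_ns M pq by simp
  have "lev (src ?M) \<le> lev p" using lev_mono[of "src ?M" p] sM sp pq by simp
  then have Lp: "lev q = Suc (lev p)" "lev (src ?M) = lev p" using lM ll ne gt by auto
  have g: "phi p - phi (src ?M) \<ge> eps ^ Suc (lev p)" using gap[of "src ?M" p] sM sp pq Lp by simp
  have lMq: "lev ?M = ?L" using ll ne by simp
  have pM: "phi ?M \<le> phi (src ?M) + eps ^ Suc ?L"
    using phi_ns[of ?M] M pq eps_pos lMq by (auto simp del: power_Suc)
  have pqe: "phi q = phi ?M + real (q - ?M) * eps ^ Suc ?L" using ll ne by simp
  have "real (q - ?M + 1) * eps ^ Suc ?L < eps ^ ?L"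
    using M pq by (intro eps_pow_small) simp
  then have "phi q < phi p" using g pM pqe Lp by (simp add: algebra_simps)
  then show ?thesis unfolding tau_def using Lp by simp
qed

end

context pk
begin

definition "xx i = (if 1 \<le> i \<and> i \<le> n then - tau (P (i, 0)) else 0)"

lemma P_range: "e \<in> E \<Longrightarrow> 1 \<le> P e \<and> P e \<le> N" using el_P by auto

lemma val_eq: "(i, m) \<in> E \<Longrightarrow> dg_val xx (i, m) = - tau (P (i, m))"
proof (induction m)
  case 0
  then have "1 \<le> i" "i \<le> n" using E_iff by auto
  then show ?case unfolding dg_val_def xx_def by simp
next
  case (Suc m)
  have h: "1 \<le> i" "i \<le> n" "Suc m < k" using Suc.prems E_iff by auto
  have E1: "(i, m) \<in> E" using h E_iff by simp
  have IH: "dg_val xx (i, m) = - tau (P (i, m))" using Suc.IH E1 by simp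
  have s: "succ (i, Suc m) = Some (i, m)" unfolding succA_def by simp
  have as: "\<not> st (P (i, m)) \<and> src (P (i, m)) = P (i, Suc m)" using arc_src[OF Suc.prems s] .
  have el: "el (P (i, Suc m)) = (i, Suc m)" using el_P Suc.prems by simp
  have "tau (P (i, m)) - tau (src (P (i, m))) = 1"
    using tau_arc[of "P (i, m)"] P_range[OF E1] as el by simp
  then have "tau (P (i, Suc m)) = tau (P (i, m)) - 1" using as by simp
  moreover have "dg_val xx (i, Suc m) = dg_val xx (i, m) + 1" unfolding dg_val_def by simp
  ultimately show ?case using IH by simp
qed

lemma tau_less_iff: "1 \<le> p \<Longrightarrow> p \<le> N \<Longrightarrow> 1 \<le> q \<Longrightarrow> q \<le> N \<Longrightarrow> tau p < tau q \<longleftrightarrow> p < q"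
  using tau_mono[of p q] tau_mono[of q p] by (cases p q rule: linorder_cases) auto

lemma val_less: "e \<in> E \<Longrightarrow> e' \<in> E \<Longrightarrow> dg_val xx e < dg_val xx e' \<longleftrightarrow> P e' < P e"
proof -
  assume e: "e \<in> E" "e' \<in> E"
  obtain i m where im: "e = (i, m)" by fastforce
  obtain i' m' where im': "e' = (i', m')" by fastforce
  have "dg_val xx e = - tau (P e)" "dg_val xx e' = - tau (P e')" using val_eq e im im' by auto
  then show ?thesis using tau_less_iff[of "P e'" "P e"] P_range e by auto
qed

lemma pos_xx: assumes e: "e \<in> E" shows "dg_pos n k xx e = P e"
proof -
  have "{q \<in> E. dg_val xx q > dg_val xx e} = el ` {1..<P e}"
  proof
    show "{q \<in> E. dg_val xx q > dg_val xx e} \<subseteq> el ` {1..<P e}"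
    proof
      fix q assume q: "q \<in> {q \<in> E. dg_val xx q > dg_val xx e}"
      have qE: "q \<in> E" using q by simp
      have "P q < P e" using val_less[OF e qE] q by simp
      moreover have "q = el (P q)" "1 \<le> P q" using el_P[OF qE] by auto
      ultimately show "q \<in> el ` {1..<P e}" by auto
    qed
    show "el ` {1..<P e} \<subseteq> {q \<in> E. dg_val xx q > dg_val xx e}"
    proof
      fix q assume "q \<in> el ` {1..<P e}"
      then obtain p where p: "1 \<le> p" "p < P e" "q = el p" by auto
      have pN: "p \<le> N" using p P_range[OF e] by simp
      have qE: "q \<in> E" using el_E p pN by simp
      have "P q = p" using P_el p pN by simp
      then show "q \<in> {q \<in> E. dg_val xx q > dg_val xx e}" using val_less[OF e qE] qE p by simp
    qed
  qed
  moreover have "inj_on el {1..<P e}"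
  proof (rule inj_on_subset)
    show "inj_on el {1..N}" using el_bij unfolding bij_betw_def by blast
    show "{1..<P e} \<subseteq> {1..N}" using P_range[OF e] by auto
  qed
  ultimately have "card {q \<in> E. dg_val xx q > dg_val xx e} = P e - 1" by (simp add: card_image)
  then show ?thesis unfolding dg_pos_def using P_range[OF e] by simp
qed

lemma R_iff: "(u, v) \<in> R \<longleftrightarrow> u \<in> E \<and> succ u = Some v" unfolding R_def by simp

lemma span:
  assumes ij: "1 \<le> i" "i < j" "j \<le> n"
  shows "(xx i - xx j > real k \<longleftrightarrow> (\<exists>u v. (u, v) \<in> R \<and> P (i, 0) \<le> P u \<and> P v \<le> P (j, k - 1)))
    \<and> xx i - xx j \<noteq> real k"
proof -
  have E2: "(i, 0) \<in> E" "(j, k - 1) \<in> E" using ij k1 E_iff by auto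
  let ?p = "P (i, 0)" and ?q = "P (j, k - 1)"
  have rp: "1 \<le> ?p" "?p \<le> N" "1 \<le> ?q" "?q \<le> N" using P_range E2 by auto
  have xi: "xx i = - tau ?p" using ij unfolding xx_def by simp
  have "dg_val xx (j, k - 1) = - tau ?q" using val_eq E2 by simp
  then have xj: "xx j = - tau ?q - real (k - 1)" unfolding dg_val_def by simp
  have d: "xx i - xx j - real k = tau ?q - tau ?p - 1" using xi xj k1 by (simp add: of_nat_diff)
  show ?thesis
  proof (cases "?p < ?q")
    case False
    then have "tau ?q \<le> tau ?p" using tau_less_iff[of ?p ?q] rp by linarith
    moreover have "\<not> (\<exists>u v. (u, v) \<in> R \<and> ?p \<le> P u \<and> P v \<le> ?q)"
    proof
      assume "\<exists>u v. (u, v) \<in> R \<and> ?p \<le> P u \<and> P v \<le> ?q"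
      then obtain u v where "(u, v) \<in> R" "?p \<le> P u" "P v \<le> ?q" by blast
      then show False using R_pos False by fastforce
    qed
    ultimately show ?thesis using d by auto
  next
    case True
    show ?thesis
    proof (cases "\<exists>u v. (u, v) \<in> R \<and> ?p \<le> P u \<and> P v \<le> ?q")
      case True
      then obtain u v where uv: "(u, v) \<in> R" "?p \<le> P u" "P v \<le> ?q" by blast
      have uE: "u \<in> E" "succ u = Some v" using uv(1) R_iff by auto
      have vE: "v \<in> E" using succ_E uE by blast
      have as: "\<not> st (P v) \<and> src (P v) = P u" using arc_src[OF uE] .
      have ru: "1 \<le> P u" "P u \<le> N" "1 \<le> P v" "P v \<le> N" using P_range uE vE by auto
      have ar: "tau (P v) - tau (P u) = 1 + (if snd u = 0 then eps ^ Suc (lev (P v)) else 0)"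
        using tau_arc[of "P v"] ru as el_P uE by simp
      have m1: "tau ?p \<le> tau (P u)" using tau_less_iff[of "P u" ?p] rp ru uv by linarith
      have m2: "tau (P v) \<le> tau ?q" using tau_less_iff[of ?q "P v"] rp ru uv by linarith
      have "tau ?q - tau ?p > 1"
      proof (cases "?p = P u \<and> P v = ?q")
        case True
        then have "u = (i, 0)" using P_inj uE E2 by metis
        then have "tau (P v) - tau (P u) > 1" using ar eps_pos by simp
        then show ?thesis using True by simp
      next
        case False
        then have "?p < P u \<or> P v < ?q" using uv by linarith
        then have "tau ?p < tau (P u) \<or> tau (P v) < tau ?q" using tau_less_iff rp ru by auto
        moreover have "tau (P v) - tau (P u) \<ge> 1" using ar eps_pos by simp
        ultimately show ?thesis using m1 m2 by linarith
      qed
      then show ?thesis using d True by simp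
    next
      case noarc: False
      have "tau ?q - tau ?p < 1"
      proof (rule semiorder[OF rp(1) True rp(4)])
        fix t assume t: "1 \<le> t" "t \<le> N" "\<not> st t" "?p \<le> src t" "t \<le> ?q"
        have s: "1 \<le> src t" "src t < t" "succ (el (src t)) = Some (el t)" using ns_src t by auto
        have "(el (src t), el t) \<in> R" using s el_E t unfolding R_def by simp
        moreover have "P (el (src t)) = src t" "P (el t) = t" using P_el s t by auto
        ultimately show False using noarc t by metis
      qed
      then show ?thesis using d noarc by simp
    qed
  qed
qed

lemma xx_compl: "xx \<in> shi_complement n k"
  unfolding compl_iff
proof
  show "xx \<in> ambient n" unfolding ambient_def xx_def by auto
  show "\<forall>i j l. 1 \<le> i \<and> i < j \<and> j \<le> n \<and> - int k + 1 \<le> l \<and> l \<le> int k \<longrightarrow> xx i - xx j \<noteq> of_int l"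
  proof (intro allI impI)
    fix i j l assume h: "1 \<le> i \<and> i < j \<and> j \<le> n \<and> - int k + 1 \<le> l \<and> l \<le> int k"
    show "xx i - xx j \<noteq> of_int l"
    proof (cases "l = int k")
      case True then show ?thesis using span[of i j] h by simp
    next
      case False
      show ?thesis
      proof
        assume eq: "xx i - xx j = of_int l"
        show False
        proof (cases "0 \<le> l")
          case True
          have E2: "(i, 0) \<in> E" "(j, nat l) \<in> E" using h True False k1 E_iff by auto
          have "dg_val xx (i, 0) = dg_val xx (j, nat l)" unfolding dg_val_def using eq True by simp
          then have "\<not> dg_val xx (i, 0) < dg_val xx (j, nat l)" "\<not> dg_val xx (j, nat l) < dg_val xx (i, 0)" by auto
          then have "P (i, 0) = P (j, nat l)" using val_less E2 by (meson linorder_neqE_nat)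
          then show False using P_inj E2 h by blast
        next
          case False
          have E2: "(i, nat (- l)) \<in> E" "(j, 0) \<in> E" using h False k1 E_iff by auto
          have "dg_val xx (i, nat (- l)) = dg_val xx (j, 0)" unfolding dg_val_def using eq False by simp
          then have "\<not> dg_val xx (i, nat (- l)) < dg_val xx (j, 0)" "\<not> dg_val xx (j, 0) < dg_val xx (i, nat (- l))" by auto
          then have "P (i, nat (- l)) = P (j, 0)" using val_less E2 by (meson linorder_neqE_nat)
          then show False using P_inj E2 h by blast
        qed
      qed
    qed
  qed
qed

lemma diag_xx: "diag n k xx" using k1 xx_compl by (simp add: diag_def)

lemma arcs_iff: "(p, q) \<in> dg_arcs n k xx \<longleftrightarrow> (\<exists>i m. p = (i, m) \<and> q = (i, m - 1) \<and> 1 \<le> i \<and> i \<le> n \<and> 0 < m \<and> m \<le> k - 1)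
     \<or> (\<exists>i j. p = (i, 0) \<and> q = (j, k - 1) \<and> 1 \<le> i \<and> i < j \<and> j \<le> n \<and> xx i - xx j > real k)"
  by (rule diag.arc_cases[OF diag_xx])

lemma R_arcs: assumes "(e, w) \<in> R" shows "(e, w) \<in> dg_arcs n k xx"
proof -
  have e: "e \<in> E" "succ e = Some w" using assms R_iff by auto
  obtain i m where im: "e = (i, m)" by fastforce
  have h: "1 \<le> i" "i \<le> n" "m < k" using e im E_iff by auto
  have c: "(0 < m \<and> w = (i, m - 1)) \<or>
    (m = 0 \<and> (\<exists>j. w = (j, k - 1) \<and> i < j \<and> j \<le> n \<and> A j = A i \<and> (\<forall>t. i < t \<and> t < j \<longrightarrow> A t \<noteq> A i)))"
    using succ_cases[of i m w] e im by simp
  from c show ?thesis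
  proof
    assume "0 < m \<and> w = (i, m - 1)"
    then show ?thesis unfolding arcs_iff using h im by (intro disjI1 exI[of _ i] exI[of _ m]) simp
  next
    assume "m = 0 \<and> (\<exists>j. w = (j, k - 1) \<and> i < j \<and> j \<le> n \<and> A j = A i \<and> (\<forall>t. i < t \<and> t < j \<longrightarrow> A t \<noteq> A i))"
    then obtain j where j: "m = 0" "w = (j, k - 1)" "i < j" "j \<le> n" by blast
    have "(e, w) \<in> R" "P (i, 0) \<le> P e" "P w \<le> P (j, k - 1)" using assms im j by simp_all
    then have "\<exists>u v. (u, v) \<in> R \<and> P (i, 0) \<le> P u \<and> P v \<le> P (j, k - 1)" by blast
    then have "xx i - xx j > real k" using span[of i j] h j by simp
    then show ?thesis unfolding arcs_iff using h j im by (intro disjI2 exI[of _ i] exI[of _ j]) simp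
  qed
qed

lemma arc_contains: assumes "(p, q) \<in> dg_arcs n k xx"
  shows "\<exists>u v. (u, v) \<in> R \<and> P p \<le> P u \<and> P v \<le> P q"
proof -
  from assms[unfolded arcs_iff] show ?thesis
  proof
    assume "\<exists>i m. p = (i, m) \<and> q = (i, m - 1) \<and> 1 \<le> i \<and> i \<le> n \<and> 0 < m \<and> m \<le> k - 1"
    then obtain i m where im: "p = (i, m)" "q = (i, m - 1)" "1 \<le> i" "i \<le> n" "0 < m" "m \<le> k - 1"
      by (elim exE conjE) simp
    have "(p, q) \<in> R" unfolding R_def using im k1 by (auto simp: E_iff succA_def)
    moreover have "P p \<le> P p" "P q \<le> P q" by simp_all
    ultimately show ?thesis by blast
  next
    assume "\<exists>i j. p = (i, 0) \<and> q = (j, k - 1) \<and> 1 \<le> i \<and> i < j \<and> j \<le> n \<and> xx i - xx j > real k"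
    then obtain i j where ij: "p = (i, 0)" "q = (j, k - 1)" "1 \<le> i" "i < j" "j \<le> n" "xx i - xx j > real k"
      by (elim exE conjE) simp
    have "\<exists>u v. (u, v) \<in> R \<and> P (i, 0) \<le> P u \<and> P v \<le> P (j, k - 1)"
      using span[of i j] ij(3-6) by simp
    then show ?thesis using ij(1,2) by simp
  qed
qed

lemma arcs_E: "(p, q) \<in> dg_arcs n k xx \<Longrightarrow> p \<in> E \<and> q \<in> E"
  by (rule diag.arc_E[OF diag_xx])

lemma R_nonnest: assumes a: "(e, w) \<in> R" "(e', w') \<in> R" "(e', w') \<noteq> (e, w)" "P e \<le> P e'" "P w' \<le> P w"
  shows False
proof -
  have e: "e \<in> E" "succ e = Some w" "e' \<in> E" "succ e' = Some w'" using a R_iff by auto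
  have wE: "w \<in> E" "w' \<in> E" using succ_E e by blast+
  have s1: "\<not> st (P w) \<and> src (P w) = P e" using arc_src e by blast
  have s2: "\<not> st (P w') \<and> src (P w') = P e'" using arc_src e by blast
  have r: "1 \<le> P w" "P w \<le> N" "1 \<le> P w'" "P w' \<le> N" using P_range wE by auto
  show False
  proof (cases "P w' < P w")
    case True
    then have "src (P w') < src (P w)" using fifo[of "P w'" "P w"] r s1 s2 by simp
    then show False using s1 s2 a(4) by simp
  next
    case False
    then have "P w' = P w" using a(5) by simp
    then have "w' = w" using P_inj wE by blast
    then have "e' = e" using succ_inj e by blast
    then show False using a(3) \<open>w' = w\<close> by simp
  qed
qed

lemma kept_eq: "dg_kept_arcs n k xx = R"
proof (rule set_eqI)
  fix pq :: "(nat \<times> nat) \<times> (nat \<times> nat)"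
  obtain p q :: "nat \<times> nat" where pq: "pq = (p, q)" by (cases pq) blast
  have "(p, q) \<in> dg_kept_arcs n k xx \<longleftrightarrow> (p, q) \<in> R"
  proof
    assume kp: "(p, q) \<in> dg_kept_arcs n k xx"
    then have a: "(p, q) \<in> dg_arcs n k xx" and
      nk: "\<not> (\<exists>(p', q')\<in>dg_arcs n k xx. (p', q') \<noteq> (p, q) \<and> dg_pos n k xx p \<le> dg_pos n k xx p' \<and> dg_pos n k xx q' \<le> dg_pos n k xx q)"
      unfolding dg_kept_arcs_def by auto
    obtain u v where uv: "(u, v) \<in> R" "P p \<le> P u" "P v \<le> P q" using arc_contains[OF a] by blast
    have ua: "(u, v) \<in> dg_arcs n k xx" using R_arcs uv(1) .
    have E4: "p \<in> E" "q \<in> E" "u \<in> E" "v \<in> E" using arcs_E a ua by auto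
    show "(p, q) \<in> R"
    proof (rule ccontr)
      assume "(p, q) \<notin> R"
      then have ne: "(u, v) \<noteq> (p, q)" using uv by auto
      have "dg_pos n k xx p \<le> dg_pos n k xx u" "dg_pos n k xx v \<le> dg_pos n k xx q"
        using uv pos_xx[of p] pos_xx[of q] pos_xx[of u] pos_xx[of v] E4 by simp_all
      then show False using nk ua ne by blast
    qed
  next
    assume r: "(p, q) \<in> R"
    have a: "(p, q) \<in> dg_arcs n k xx" using R_arcs r .
    have "\<not> (\<exists>(p', q')\<in>dg_arcs n k xx. (p', q') \<noteq> (p, q) \<and> dg_pos n k xx p \<le> dg_pos n k xx p' \<and> dg_pos n k xx q' \<le> dg_pos n k xx q)"
    proof
      assume "\<exists>(p', q')\<in>dg_arcs n k xx. (p', q') \<noteq> (p, q) \<and> dg_pos n k xx p \<le> dg_pos n k xx p' \<and> dg_pos n k xx q' \<le> dg_pos n k xx q"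
      then obtain p' q' where b: "(p', q') \<in> dg_arcs n k xx" "(p', q') \<noteq> (p, q)"
        "dg_pos n k xx p \<le> dg_pos n k xx p'" "dg_pos n k xx q' \<le> dg_pos n k xx q" by blast
      have E4: "p \<in> E" "q \<in> E" "p' \<in> E" "q' \<in> E" using arcs_E a b(1) by auto
      have b2: "P p \<le> P p'" "P q' \<le> P q" using b(3,4) pos_xx E4 by auto
      obtain u v where uv: "(u, v) \<in> R" "P p' \<le> P u" "P v \<le> P q'" using arc_contains[OF b(1)] by blast
      show False
      proof (cases "(u, v) = (p, q)")
        case True
        then have "P p' = P p" "P q' = P q" using uv b2 by auto
        then have "p' = p" "q' = q" using P_inj E4 by blast+
        then show False using b(2) by simp
      next
        case False
        then show False using R_nonnest[OF r uv(1) False] uv b2 by linarith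
      qed
    qed
    then show "(p, q) \<in> dg_kept_arcs n k xx" using a unfolding dg_kept_arcs_def by blast
  qed
  then show "pq \<in> dg_kept_arcs n k xx \<longleftrightarrow> pq \<in> R" using pq by simp
qed

lemma chain_eq: assumes i: "1 \<le> i" "i \<le> n"
  shows "dg_chain n k xx (i, 0) = {(j, m). 1 \<le> j \<and> j \<le> n \<and> m < k \<and> A j = A i}"
proof
  show "dg_chain n k xx (i, 0) \<subseteq> {(j, m). 1 \<le> j \<and> j \<le> n \<and> m < k \<and> A j = A i}"
  proof
    fix q assume "q \<in> dg_chain n k xx (i, 0)"
    then have "((i, 0), q) \<in> (R \<union> R\<inverse>)\<^sup>*" unfolding dg_chain_def kept_eq by simp
    then have "q \<in> E \<and> A (fst q) = A i"
    proof (induction rule: rtrancl_induct)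
      case base then show ?case using i k1 E_iff by simp
    next
      case (step y z)
      from step.hyps(2) show ?case
      proof
        assume "(y, z) \<in> R"
        then have yz: "y \<in> E" "succ y = Some z" using R_iff by auto
        have "z \<in> E" using succ_E[OF yz] .
        moreover have "A (fst z) = A (fst y)" using succ_A[OF yz] .
        ultimately show ?thesis using step.IH by simp
      next
        assume "(y, z) \<in> R\<inverse>"
        then have zy: "z \<in> E" "succ z = Some y" using R_iff by auto
        have "A (fst y) = A (fst z)" using succ_A[OF zy] .
        then show ?thesis using zy(1) step.IH by simp
      qed
    qed
    moreover obtain j m where "q = (j, m)" by fastforce
    ultimately show "q \<in> {(j, m). 1 \<le> j \<and> j \<le> n \<and> m < k \<and> A j = A i}" using E_iff by auto
  qed
next
  show "{(j, m). 1 \<le> j \<and> j \<le> n \<and> m < k \<and> A j = A i} \<subseteq> dg_chain n k xx (i, 0)"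
  proof
    fix q assume q: "q \<in> {(j, m). 1 \<le> j \<and> j \<le> n \<and> m < k \<and> A j = A i}"
    obtain j m where jm: "q = (j, m)" by fastforce
    have h: "1 \<le> j" "j \<le> n" "m < k" "A j = A i" using q jm by auto
    let ?s = "(fl (A i), k - 1)"
    have r1: "(?s, (i, 0)) \<in> R\<^sup>*" using reach[of i 0] i k1 by simp
    have r2: "(?s, (j, m)) \<in> R\<^sup>*" using reach[of j m] h by simp
    have "((i, 0), ?s) \<in> (R\<inverse>)\<^sup>*" using r1 by (simp add: rtrancl_converse)
    then have a1: "((i, 0), ?s) \<in> (R \<union> R\<inverse>)\<^sup>*" using rtrancl_mono[of "R\<inverse>" "R \<union> R\<inverse>"] by blast
    have a2: "(?s, (j, m)) \<in> (R \<union> R\<inverse>)\<^sup>*" using r2 rtrancl_mono[of R "R \<union> R\<inverse>"] by blast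
    have "((i, 0), (j, m)) \<in> (R \<union> R\<inverse>)\<^sup>*" using rtrancl_trans[OF a1 a2] .
    then show "q \<in> dg_chain n k xx (i, 0)" unfolding dg_chain_def kept_eq using jm by simp
  qed
qed

lemma sigma_xx: "sigma_pt n k xx = a"
proof (rule nth_equalityI)
  show "length (sigma_pt n k xx) = length a" unfolding sigma_pt_def using len_a by simp
next
  fix t assume "t < length (sigma_pt n k xx)"
  moreover have "length (sigma_pt n k xx) = n" unfolding sigma_pt_def by simp
  ultimately have t: "t < n" by simp
  let ?i = "Suc t"
  have i: "1 \<le> ?i" "?i \<le> n" using t by auto
  let ?C = "{(j, m). 1 \<le> j \<and> j \<le> n \<and> m < k \<and> A j = A ?i}"
  have CE: "?C \<subseteq> E" using E_iff by auto
  have "dg_pos n k xx ` ?C = P ` ?C"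
  proof (rule image_cong)
    fix e assume "e \<in> ?C"
    then have "e \<in> E" using CE by blast
    then show "dg_pos n k xx e = P e" by (rule pos_xx)
  qed simp
  then have "dg_pos n k xx ` dg_chain n k xx (?i, 0) = P ` ?C" using chain_eq[OF i] by simp
  moreover have "Min (P ` ?C) = A ?i"
  proof (rule Min_eqI)
    show "finite (P ` ?C)" using CE finite_E finite_subset by blast
    show "\<And>y. y \<in> P ` ?C \<Longrightarrow> A ?i \<le> y"
    proof -
      fix y assume "y \<in> P ` ?C"
      then obtain j m where jm: "y = P (j, m)" "1 \<le> j" "j \<le> n" "m < k" "A j = A ?i" by auto
      then show "A ?i \<le> y" using class_pos[of j m] by simp
    qed
    have fl: "1 \<le> fl (A ?i)" "fl (A ?i) \<le> n" "A (fl (A ?i)) = A ?i" using st_fl[OF st_A[OF i]] by auto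
    have inC: "(fl (A ?i), k - 1) \<in> ?C" using fl k1 by simp
    have "A ?i = P (fl (A ?i), k - 1)" using start_pos[OF i] by simp
    then show "A ?i \<in> P ` ?C" by (rule image_eqI[OF _ inC])
  qed
  ultimately have "Min (dg_pos n k xx ` dg_chain n k xx (?i, 0)) = A ?i" by simp
  moreover have "sigma_pt n k xx ! t = Min (dg_pos n k xx ` dg_chain n k xx ([1..<n+1] ! t, 0))"
  proof -
    have l: "t < length [1..<n+1]" using t by simp
    show ?thesis unfolding sigma_pt_def by (rule nth_map[OF l])
  qed
  moreover have "[1..<n+1] ! t = ?i" using t by (subst nth_upt) auto
  moreover have "A ?i = a ! t" unfolding A_def Aof_def by simp
  ultimately show "sigma_pt n k xx ! t = a ! t" by simp
qed

end

lemma surj_main: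
  assumes "1 \<le> k" "1 \<le> n" "k_parking n k a"
  shows "\<exists>x\<in>shi_complement n k. sigma_pt n k x = a"
proof -
  interpret pk n k a using assms by unfold_locales
  show ?thesis using xx_compl sigma_xx by blast
qed

theorem theorem3p5:
  fixes n k :: nat
  assumes "1 \<le> n" and "1 \<le> k"
  shows "bij_betw (shi_sigma n k) (shi_regions n k) {a. k_parking n k a}"
  using main_from_surj[OF assms(2)] surj_main[OF assms(2) assms(1)] by blast

end
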